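(* Let $(X,d)$ be a metric space, $\mu$ a non-atomic Borel measure on $X$, $m$ a Borel measure on $X$, $1\le p<\infty$, $\beta>0$, and let $\Gamma^*\subset\Gamma^\mu$ be a family of paths closed under taking non-trivial subpaths such that any two points of $X$ are joined by a path in $\Gamma^*$, and which has the $\mu$-arc-chord property with exponent $\beta$. If continuous functions are dense in $M^{\beta,p}$, then $M^{\beta,p}\hookrightarrow N^{1,p}$: there is $C>0$ such that every $f\in M^{\beta,p}$ has an $m$-a.e. representative in $\tilde N^{1,p}$ with $\|f\|_{N^{1,p}}\le C\|f\|_{M^{\beta,p}}$.
   Context: A path is a continuous map $\gamma:[a,b]\to X$; a subpath is a restriction to a subinterval, trivial if that interval is a point; $\mathrm{Im}(\gamma)=\gamma([a,b])$. $\mu$ non-atomic: $\mu(\{x\})=0$ for all $x$. $\Gamma^\mu$ is the set of all non-trivial injective paths $\gamma$ with $0<\mu(\mathrm{Im}(\tilde\gamma))<\infty$ for every non-trivial subpath $\tilde\gamma$. For Borel $g\ge0$, $\int_\gamma g:=\int_{\mathrm{Im}(\gamma)}g\,d\mu$. $\mu$-arc-chord property with exponent $\beta$: there is $C_\mu>0$ with $\mathrm{diam}(\mathrm{Im}(\gamma))^\beta\le C_\mu\,\mu(\mathrm{Im}(\gamma))$ for all $\gamma\in\Gamma^*$. For $\Gamma\subset\Gamma^*$, $\mathrm{Mod}_p(\Gamma)=\inf\int_Xg^p\,dm$ over Borel $g\ge0$ with $\int_\gamma g\ge1$ on $\Gamma$. A Borel $\rho\ge0$ is a $p$-weak upper gradient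 of $f$ if $|f(x)-f(y)|\le\int_\gamma\rho$ for all $\gamma\in\Gamma^*$ (endpoints $x,y$) outside a family of $p$-modulus zero. $\tilde N^{1,p}$: $f\in L^p(m)$ with a $p$-weak upper gradient in $L^p(m)$; $\|f\|_{N^{1,p}}=\|f\|_{L^p(m)}+\inf_\rho\|\rho\|_{L^p(m)}$; $N^{1,p}=\tilde N^{1,p}/\!\sim$ with $f\sim g\iff\|f-g\|_{N^{1,p}}=0$. $M^{\beta,p}$: the set of $f\in L^p(m)$ (modulo $m$-a.e. equality) for which there exist $g\in L^p(m)$, $g\ge0$, and $E$ with $m(E)=0$ such that $|f(x)-f(y)|\le d(x,y)^\beta(g(x)+g(y))$ for all $x,y\in X\setminus E$; $\|f\|_{M^{\beta,p}}=\|f\|_{L^p(m)}+\inf_g\|g\|_{L^p(m)}$. *)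

theory Defs
  imports "HOL-Analysis.Analysis"
begin

definition enn_powr :: "ennreal \<Rightarrow> real \<Rightarrow> ennreal" where
  "enn_powr x q = (if x = \<infinity> then \<infinity> else ennreal (enn2real x powr q))"

definition lp_enorm :: "'a measure \<Rightarrow> real \<Rightarrow> ('a \<Rightarrow> ennreal) \<Rightarrow> ennreal" where
  "lp_enorm m p g = enn_powr (\<integral>\<^sup>+ x. enn_powr (g x) p \<partial>m) (1 / p)"

definition in_Lp :: "'a measure \<Rightarrow> real \<Rightarrow> ('a \<Rightarrow> real) \<Rightarrow> bool" where
  "in_Lp m p f \<longleftrightarrow> f \<in> borel_measurable m \<and> lp_enorm m p (\<lambda>x. ennreal \<bar>f x\<bar>) < \<infinity>"

text \<open>A path \<gamma> : [a,b] \<rightarrow> X is represented by the triple (a, b, \<gamma>); only the values on [a,b] matter.\<close>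
type_synonym 'a rpath = "real \<times> real \<times> (real \<Rightarrow> 'a)"

definition pimage :: "'a rpath \<Rightarrow> 'a set" where
  "pimage P = (case P of (a, b, \<gamma>) \<Rightarrow> \<gamma> ` {a..b})"

definition Gamma_mu :: "'a::topological_space measure \<Rightarrow> 'a rpath set" where
  "Gamma_mu \<mu> = {(a, b, \<gamma>). a < b \<and> continuous_on {a..b} \<gamma> \<and> inj_on \<gamma> {a..b} \<and>
      (\<forall>c d. a \<le> c \<and> c < d \<and> d \<le> b \<longrightarrow>
         0 < emeasure \<mu> (\<gamma> ` {c..d}) \<and> emeasure \<mu> (\<gamma> ` {c..d}) < \<infinity>)}"

definition subpath_closed :: "'a rpath set \<Rightarrow> bool" where
  "subpath_closed \<Gamma> \<longleftrightarrow> (\<forall>a b \<gamma> c d. (a, b, \<gamma>) \<in> \<Gamma> \<and> a \<le> c \<and> c < d \<and> d \<le> b \<longrightarrow> (c, d, \<gamma>) \<in> \<Gamma>)"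

definition joins_points :: "'a rpath set \<Rightarrow> bool" where
  "joins_points \<Gamma> \<longleftrightarrow> (\<forall>x y. x \<noteq> y \<longrightarrow> (\<exists>a b \<gamma>. (a, b, \<gamma>) \<in> \<Gamma> \<and> \<gamma> a = x \<and> \<gamma> b = y))"

definition path_int :: "'a measure \<Rightarrow> 'a rpath \<Rightarrow> ('a \<Rightarrow> ennreal) \<Rightarrow> ennreal" where
  "path_int \<mu> P g = (\<integral>\<^sup>+ x \<in> pimage P. g x \<partial>\<mu>)"

definition arc_chord :: "'a::metric_space measure \<Rightarrow> real \<Rightarrow> 'a rpath set \<Rightarrow> bool" where
  "arc_chord \<mu> \<beta> \<Gamma> \<longleftrightarrow> (\<exists>C>0. \<forall>P\<in>\<Gamma>.
      ennreal (diameter (pimage P) powr \<beta>) \<le> ennreal C * emeasure \<mu> (pimage P))"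

definition Mod :: "'a::topological_space measure \<Rightarrow> 'a measure \<Rightarrow> real \<Rightarrow> 'a rpath set \<Rightarrow> ennreal" where
  "Mod \<mu> m p \<Gamma> = (INF g \<in> {g. g \<in> borel_measurable borel \<and> (\<forall>P\<in>\<Gamma>. 1 \<le> path_int \<mu> P g)}.
      \<integral>\<^sup>+ x. enn_powr (g x) p \<partial>m)"

definition weak_upper_gradient ::
  "'a::topological_space rpath set \<Rightarrow> 'a measure \<Rightarrow> 'a measure \<Rightarrow> real \<Rightarrow> ('a \<Rightarrow> real) \<Rightarrow> ('a \<Rightarrow> ennreal) \<Rightarrow> bool" where
  "weak_upper_gradient \<Gamma>s \<mu> m p f \<rho> \<longleftrightarrow> \<rho> \<in> borel_measurable borel \<and>
     (\<exists>\<Gamma>0 \<subseteq> \<Gamma>s. Mod \<mu> m p \<Gamma>0 = 0 \<and>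
        (\<forall>a b \<gamma>. (a, b, \<gamma>) \<in> \<Gamma>s - \<Gamma>0 \<longrightarrow> ennreal \<bar>f (\<gamma> a) - f (\<gamma> b)\<bar> \<le> path_int \<mu> (a, b, \<gamma>) \<rho>))"

definition Ntilde :: "'a::topological_space rpath set \<Rightarrow> 'a measure \<Rightarrow> 'a measure \<Rightarrow> real \<Rightarrow> ('a \<Rightarrow> real) set" where
  "Ntilde \<Gamma>s \<mu> m p = {f. in_Lp m p f \<and>
      (\<exists>\<rho>. weak_upper_gradient \<Gamma>s \<mu> m p f \<rho> \<and> lp_enorm m p \<rho> < \<infinity>)}"

definition N_norm :: "'a::topological_space rpath set \<Rightarrow> 'a measure \<Rightarrow> 'a measure \<Rightarrow> real \<Rightarrow> ('a \<Rightarrow> real) \<Rightarrow> ennreal" where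
  "N_norm \<Gamma>s \<mu> m p f = lp_enorm m p (\<lambda>x. ennreal \<bar>f x\<bar>) +
      (INF \<rho> \<in> {\<rho>. weak_upper_gradient \<Gamma>s \<mu> m p f \<rho>}. lp_enorm m p \<rho>)"

definition hajlasz_gradient ::
  "'a::metric_space measure \<Rightarrow> real \<Rightarrow> real \<Rightarrow> ('a \<Rightarrow> real) \<Rightarrow> ('a \<Rightarrow> real) \<Rightarrow> bool" where
  "hajlasz_gradient m \<beta> p f g \<longleftrightarrow> in_Lp m p g \<and> (\<forall>x. 0 \<le> g x) \<and>
     (\<exists>E \<in> sets m. emeasure m E = 0 \<and>
        (\<forall>x y. x \<notin> E \<and> y \<notin> E \<longrightarrow> \<bar>f x - f y\<bar> \<le> dist x y powr \<beta> * (g x + g y)))"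

definition Hajlasz :: "'a::metric_space measure \<Rightarrow> real \<Rightarrow> real \<Rightarrow> ('a \<Rightarrow> real) set" where
  "Hajlasz m \<beta> p = {f. in_Lp m p f \<and> (\<exists>g. hajlasz_gradient m \<beta> p f g)}"

definition M_norm :: "'a::metric_space measure \<Rightarrow> real \<Rightarrow> real \<Rightarrow> ('a \<Rightarrow> real) \<Rightarrow> ennreal" where
  "M_norm m \<beta> p f = lp_enorm m p (\<lambda>x. ennreal \<bar>f x\<bar>) +
      (INF g \<in> {g. hajlasz_gradient m \<beta> p f g}. lp_enorm m p (\<lambda>x. ennreal (g x)))"

definition continuous_dense_in_Hajlasz :: "'a::metric_space measure \<Rightarrow> real \<Rightarrow> real \<Rightarrow> bool" where
  "continuous_dense_in_Hajlasz m \<beta> p \<longleftrightarrow>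
     (\<forall>f \<in> Hajlasz m \<beta> p. \<forall>\<epsilon>>0. \<exists>u. continuous_on UNIV u \<and> u \<in> Hajlasz m \<beta> p \<and>
        M_norm m \<beta> p (\<lambda>x. f x - u x) < ennreal \<epsilon>)"

end

theory Submission
  imports Defs
begin


lemma ennreal_two: "0 \<le> (x::real) \<Longrightarrow> 2 * ennreal (x/2) = ennreal x"
  using ennreal_mult[of 2 "x/2"] by simp

lemma ennreal_lin: "0 \<le> p \<Longrightarrow> 0 \<le> x \<Longrightarrow> 0 \<le> q \<Longrightarrow> 0 \<le> y \<Longrightarrow>
   ennreal (p*x + q*y) = ennreal p * ennreal x + ennreal q * ennreal y"
  by (subst ennreal_plus) (auto simp: ennreal_mult)

locale gpath =
  fixes \<mu> :: "'a::metric_space measure" and \<beta> C :: real and a b :: real and \<gamma> :: "real \<Rightarrow> 'a"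
  assumes sets_mu: "sets \<mu> = sets borel" and noatom: "\<And>x. emeasure \<mu> {x} = 0"
    and ab: "a < b" and cont: "continuous_on {a..b} \<gamma>" and inj: "inj_on \<gamma> {a..b}"
    and pos: "\<And>s t. a \<le> s \<Longrightarrow> s < t \<Longrightarrow> t \<le> b \<Longrightarrow> 0 < emeasure \<mu> (\<gamma>`{s..t})"
    and fin: "\<And>s t. a \<le> s \<Longrightarrow> s < t \<Longrightarrow> t \<le> b \<Longrightarrow> emeasure \<mu> (\<gamma>`{s..t}) < \<infinity>"
    and ac: "\<And>s t. a \<le> s \<Longrightarrow> s < t \<Longrightarrow> t \<le> b \<Longrightarrow> diameter (\<gamma>`{s..t}) powr \<beta> \<le> C * measure \<mu> (\<gamma>`{s..t})"
    and beta: "0 < \<beta>" and Cpos: "0 < C"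
begin

lemma img_compact: "a \<le> s \<Longrightarrow> t \<le> b \<Longrightarrow> compact (\<gamma>`{s..t})"
  by (rule compact_continuous_image) (auto intro: continuous_on_subset[OF cont])

lemma img_sets: "a \<le> s \<Longrightarrow> t \<le> b \<Longrightarrow> \<gamma>`{s..t} \<in> sets \<mu>"
  unfolding sets_mu by (intro borel_closed compact_imp_closed img_compact)

lemma pt_sets: "{x} \<in> sets \<mu>"
  unfolding sets_mu by (intro borel_closed) auto

lemma pt_null: "{x} \<in> null_sets \<mu>"
  using pt_sets noatom by (auto simp: null_sets_def)

lemma fin': "a \<le> s \<Longrightarrow> t \<le> b \<Longrightarrow> emeasure \<mu> (\<gamma>`{s..t}) < \<infinity>"
proof (cases "s < t")
  case False
  then have "\<gamma>`{s..t} = {} \<or> \<gamma>`{s..t} = {\<gamma> s}" by (cases "s = t") auto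
  then show ?thesis using noatom by auto
qed (use fin in auto)

lemma fin_top: "a \<le> s \<Longrightarrow> t \<le> b \<Longrightarrow> emeasure \<mu> (\<gamma>`{s..t}) < top"
  using fin' by simp

lemma emeasure_img: "a \<le> s \<Longrightarrow> t \<le> b \<Longrightarrow> emeasure \<mu> (\<gamma>`{s..t}) = ennreal (measure \<mu> (\<gamma>`{s..t}))"
  using fin'[of s t] emeasure_eq_ennreal_measure[of \<mu> "\<gamma>`{s..t}"] by fastforce

lemma fmeas: "a \<le> s \<Longrightarrow> t \<le> b \<Longrightarrow> \<gamma>`{s..t} \<in> fmeasurable \<mu>"
  using fin' img_sets by (auto simp: fmeasurable_def)

lemma img_Int: "a \<le> s \<Longrightarrow> s \<le> t \<Longrightarrow> t \<le> r \<Longrightarrow> r \<le> b \<Longrightarrow> \<gamma>`{s..t} \<inter> \<gamma>`{t..r} \<subseteq> {\<gamma> t}"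
  using inj by (auto simp: inj_on_def) (metis atLeastAtMost_iff order_antisym order_trans)

lemma img_Un: "s \<le> t \<Longrightarrow> t \<le> r \<Longrightarrow> \<gamma>`{s..t} \<union> \<gamma>`{t..r} = \<gamma>`{s..r}"
  by (metis image_Un ivl_disj_un_two_touch(4))

lemma add: "a \<le> s \<Longrightarrow> s \<le> t \<Longrightarrow> t \<le> r \<Longrightarrow> r \<le> b \<Longrightarrow>
   measure \<mu> (\<gamma>`{s..r}) = measure \<mu> (\<gamma>`{s..t}) + measure \<mu> (\<gamma>`{t..r})"
proof -
  assume h: "a \<le> s" "s \<le> t" "t \<le> r" "r \<le> b"
  have "\<gamma>`{s..t} \<inter> \<gamma>`{t..r} \<in> null_sets \<mu>"
    by (rule null_sets_subset[OF pt_null[of "\<gamma> t"]]) (use h img_sets img_Int in auto)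
  then have "measure \<mu> (\<gamma>`{s..t} \<inter> \<gamma>`{t..r}) = 0" by (auto simp: measure_def null_sets_def)
  then show ?thesis using measure_Un3[OF fmeas fmeas, of s t t r] h img_Un[of s t r] by auto
qed

lemma meas_pos: "a \<le> s \<Longrightarrow> s < t \<Longrightarrow> t \<le> b \<Longrightarrow> 0 < measure \<mu> (\<gamma>`{s..t})"
  using pos[of s t] emeasure_img[of s t] by auto

lemma mono_meas: "a \<le> s \<Longrightarrow> s \<le> s' \<Longrightarrow> t' \<le> t \<Longrightarrow> t \<le> b \<Longrightarrow> measure \<mu> (\<gamma>`{s'..t'}) \<le> measure \<mu> (\<gamma>`{s..t})"
  by (intro measure_mono_fmeasurable) (auto intro: fmeas img_sets)

lemma Phi_diff: "a \<le> s \<Longrightarrow> s \<le> b \<Longrightarrow> a \<le> t \<Longrightarrow> t \<le> b \<Longrightarrow>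
  \<bar>measure \<mu> (\<gamma>`{a..s}) - measure \<mu> (\<gamma>`{a..t})\<bar> = measure \<mu> (\<gamma>`{min s t..max s t})"
  using add[of a s t] add[of a t s] by (cases "s \<le> t") (auto simp: min_def max_def)

lemma Inter_pt: assumes "\<And>n. \<bar>x - t\<bar> \<le> 1 / Suc n" shows "x = (t::real)"
proof (rule ccontr)
  assume "x \<noteq> t"
  then have "0 < \<bar>x - t\<bar>" by auto
  then obtain n where "inverse (real (Suc n)) < \<bar>x - t\<bar>" using reals_Archimedean by blast
  with assms[of n] show False by (simp add: field_simps)
qed

lemma Phi_cont: "continuous_on {a..b} (\<lambda>t. measure \<mu> (\<gamma>`{a..t}))"
proof (clarsimp simp: continuous_on_iff)
  fix t e :: real assume t: "a \<le> t" "t \<le> b" and e: "0 < e"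
  define I where "I n = {max a (t - 1/Suc n) .. min b (t + 1/Suc n)}" for n
  define W where "W n = \<gamma>`I n" for n
  have dec: "decseq W"
  proof -
    have h: "1/real (Suc n) \<le> 1/real (Suc m)" if "m \<le> n" for m n
      using that by (intro divide_left_mono) auto
    show ?thesis unfolding decseq_def W_def I_def
    proof (intro allI impI image_mono)
      fix m n :: nat assume "m \<le> n"
      from h[OF this] show "{max a (t - 1 / real (Suc n))..min b (t + 1 / real (Suc n))}
         \<subseteq> {max a (t - 1 / real (Suc m))..min b (t + 1 / real (Suc m))}" by auto
    qed
  qed
  have Wsets: "range W \<subseteq> sets \<mu>" unfolding W_def I_def by (auto intro!: img_sets)
  have Wfin: "emeasure \<mu> (W i) \<noteq> \<infinity>" for i unfolding W_def I_def using fin' by (simp add: less_top)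
  have "(\<Inter>i. I i) = {t}"
  proof
    show "(\<Inter>i. I i) \<subseteq> {t}"
    proof
      fix x assume "x \<in> (\<Inter>i. I i)"
      then have xI: "x \<in> I n" for n by auto
      have "\<bar>x - t\<bar> \<le> 1 / Suc n" for n using xI[of n] unfolding I_def by (auto simp: abs_le_iff)
      then show "x \<in> {t}" using Inter_pt by auto
    qed
  qed (use t in \<open>auto simp: I_def\<close>)
  moreover have "(\<Inter>i. W i) = \<gamma> ` (\<Inter>i. I i)"
    unfolding W_def by (rule image_INT[symmetric, OF inj]) (auto simp: I_def)
  ultimately have "(\<Inter>i. W i) = {\<gamma> t}" by simp
  then have "(\<lambda>i. emeasure \<mu> (W i)) \<longlonglongrightarrow> 0"
    using Lim_emeasure_decseq[OF Wsets dec Wfin] noatom by simp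
  then have "eventually (\<lambda>i. emeasure \<mu> (W i) < ennreal e) sequentially"
    using e by (intro order_tendstoD(2)) auto
  then obtain n where n: "emeasure \<mu> (W n) < ennreal e" by (auto simp: eventually_sequentially)
  have mW: "measure \<mu> (W n) < e"
    using n Wfin[of n] e by (simp add: measure_def enn2real_less_iff less_top)
  show "\<exists>d>0. \<forall>x'\<in>{a..b}. dist x' t < d \<longrightarrow> dist (measure \<mu> (\<gamma> ` {a..x'})) (measure \<mu> (\<gamma> ` {a..t})) < e"
  proof (intro exI[of _ "1/Suc n"] conjI ballI impI)
    fix s assume s: "s \<in> {a..b}" "dist s t < 1 / Suc n"
    have "dist (measure \<mu> (\<gamma> ` {a..s})) (measure \<mu> (\<gamma> ` {a..t})) = measure \<mu> (\<gamma>`{min s t..max s t})"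
      using Phi_diff[of s t] s t by (simp add: dist_real_def)
    also have "\<dots> \<le> measure \<mu> (W n)"
      unfolding W_def I_def using s t by (intro mono_meas) (auto simp: dist_real_def)
    finally show "dist (measure \<mu> (\<gamma> ` {a..s})) (measure \<mu> (\<gamma> ` {a..t})) < e" using mW by simp
  qed simp
qed

lemma meas_borel: "f \<in> borel_measurable borel \<Longrightarrow> f \<in> borel_measurable \<mu>"
  by (subst measurable_cong_sets[OF sets_mu refl])

lemma space_mu: "space \<mu> = UNIV"
  using sets_eq_imp_space_eq[OF sets_mu] by simp

lemma set_add:
  assumes f: "f \<in> borel_measurable \<mu>" and h: "a \<le> s" "s \<le> t" "t \<le> r" "r \<le> b"
  shows "(\<integral>\<^sup>+x\<in>\<gamma>`{s..r}. f x \<partial>\<mu>) = (\<integral>\<^sup>+x\<in>\<gamma>`{s..t}. f x \<partial>\<mu>) + (\<integral>\<^sup>+x\<in>\<gamma>`{t..r}. f x \<partial>\<mu>)"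
proof -
  have "AE x in \<mu>. x \<notin> {\<gamma> t}" by (rule AE_not_in[OF pt_null])
  then have "AE x in \<mu>. f x * indicator (\<gamma>`{s..r}) x = f x * indicator (\<gamma>`{s..t}) x + f x * indicator (\<gamma>`{t..r}) x"
  proof eventually_elim
    case (elim x)
    have "x \<notin> \<gamma>`{s..t} \<inter> \<gamma>`{t..r}" using img_Int[OF h] elim by blast
    moreover have "x \<in> \<gamma>`{s..r} \<longleftrightarrow> x \<in> \<gamma>`{s..t} \<or> x \<in> \<gamma>`{t..r}" using img_Un[of s t r] h by blast
    ultimately show ?case by (auto split: split_indicator)
  qed
  then have "(\<integral>\<^sup>+x\<in>\<gamma>`{s..r}. f x \<partial>\<mu>) = (\<integral>\<^sup>+x. f x * indicator (\<gamma>`{s..t}) x + f x * indicator (\<gamma>`{t..r}) x \<partial>\<mu>)"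
    by (rule nn_integral_cong_AE)
  also have "\<dots> = (\<integral>\<^sup>+x\<in>\<gamma>`{s..t}. f x \<partial>\<mu>) + (\<integral>\<^sup>+x\<in>\<gamma>`{t..r}. f x \<partial>\<mu>)"
    using h by (intro nn_integral_add borel_measurable_times_ennreal f borel_measurable_indicator img_sets) auto
  finally show ?thesis .
qed

lemma set_mono_int:
  assumes "a \<le> s" "s \<le> s'" "t' \<le> t" "t \<le> b"
  shows "(\<integral>\<^sup>+x\<in>\<gamma>`{s'..t'}. f x \<partial>\<mu>) \<le> (\<integral>\<^sup>+x\<in>\<gamma>`{s..t}. f x \<partial>\<mu>)"
proof (intro nn_integral_mono)
  fix x
  have "\<gamma>`{s'..t'} \<subseteq> \<gamma>`{s..t}" using assms by (intro image_mono) auto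
  then show "f x * indicator (\<gamma>`{s'..t'}) x \<le> f x * indicator (\<gamma>`{s..t}) x"
    by (auto split: split_indicator)
qed

lemma Phi_a: "measure \<mu> (\<gamma>`{a..a}) = 0"
  using noatom[of "\<gamma> a"] by (simp add: measure_def)

lemma Phi_strict: "a \<le> s \<Longrightarrow> s < t \<Longrightarrow> t \<le> b \<Longrightarrow> measure \<mu> (\<gamma>`{a..s}) < measure \<mu> (\<gamma>`{a..t})"
  using add[of a s t] meas_pos[of s t] by auto

lemma avg:
  assumes w: "w \<in> borel_measurable borel" "\<And>x. 0 \<le> w x"
    and D: "D \<in> sets borel" "emeasure \<mu> (\<gamma>`{a..b} \<inter> D) = 0"
    and st: "a \<le> s" "s < t" "t \<le> b"
  shows "\<exists>r\<in>{s..t}. \<gamma> r \<notin> D \<and> ennreal (w (\<gamma> r) * measure \<mu> (\<gamma>`{s..t})) \<le> (\<integral>\<^sup>+x\<in>\<gamma>`{s..t}. ennreal (w x) \<partial>\<mu>)"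
proof -
  define A where "A = \<gamma>`{s..t}"
  define J where "J = (\<integral>\<^sup>+x\<in>A. ennreal (w x) \<partial>\<mu>)"
  have Asets: "A \<in> sets \<mu>" unfolding A_def using st by (intro img_sets) auto
  have Dsets: "D \<in> sets \<mu>" using D sets_mu by simp
  have "A \<inter> D \<subseteq> \<gamma>`{a..b} \<inter> D" unfolding A_def using st by auto
  moreover have N: "\<gamma>`{a..b} \<inter> D \<in> null_sets \<mu>"
    using D(2) img_sets[of a b] Dsets by (intro null_setsI) auto
  ultimately have ADnull: "A \<inter> D \<in> null_sets \<mu>"
    using Asets Dsets by (intro null_sets_subset[OF N]) auto
  have posA: "0 < emeasure \<mu> A" unfolding A_def using pos st by auto
  have ADpos: "emeasure \<mu> (A - D) \<noteq> 0"
  proof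
    assume "emeasure \<mu> (A - D) = 0"
    then have "A - D \<in> null_sets \<mu>" using Asets Dsets by (auto simp: null_sets_def)
    moreover have "A = (A - D) \<union> (A \<inter> D)" by blast
    ultimately have "A \<in> null_sets \<mu>" using ADnull by (metis null_sets.Un)
    with posA show False by (auto simp: null_sets_def)
  qed
  have ex: "\<exists>r\<in>{s..t}. \<gamma> r \<notin> D"
  proof (rule ccontr)
    assume "\<not> ?thesis"
    then have "A - D = {}" unfolding A_def by auto
    with ADpos show False by simp
  qed
  show ?thesis
  proof (cases "J = \<infinity>")
    case True then show ?thesis using ex unfolding J_def A_def by auto
  next
    case False
    define \<nu> where "\<nu> = measure \<mu> A"
    have \<nu>pos: "0 < \<nu>" unfolding \<nu>_def A_def using meas_pos st by auto
    have eA: "emeasure \<mu> A = ennreal \<nu>" unfolding \<nu>_def A_def using emeasure_img st by auto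
    define Jr where "Jr = enn2real J"
    have JJr: "J = ennreal Jr" unfolding Jr_def using False by (simp add: ennreal_enn2real_if)
    have Jr0: "0 \<le> Jr" unfolding Jr_def by simp
    show ?thesis
    proof (rule ccontr)
      assume nt: "\<not> ?thesis"
      have H: "Jr < w (\<gamma> r) * \<nu>" if r: "r \<in> {s..t}" "\<gamma> r \<notin> D" for r
      proof -
        have "\<not> ennreal (w (\<gamma> r) * \<nu>) \<le> ennreal Jr"
          using nt r unfolding J_def[symmetric] A_def[symmetric] \<nu>_def[symmetric] JJr by blast
        then show "Jr < w (\<gamma> r) * \<nu>" using ennreal_leI[of "w (\<gamma> r) * \<nu>" Jr] by linarith
      qed
      define c where "c = Jr / \<nu>"
      have Hc: "x \<in> A \<Longrightarrow> x \<notin> D \<Longrightarrow> c < w x" for x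
        using H \<nu>pos unfolding A_def c_def by (auto simp: field_simps)
      have wm: "(\<lambda>x. ennreal (w x)) \<in> borel_measurable \<mu>" using w by (intro meas_borel) auto
      have If: "(\<integral>\<^sup>+x. ennreal c * indicator A x \<partial>\<mu>) = J"
        using nn_integral_cmult_indicator[OF Asets, of "ennreal c"] eA \<nu>pos Jr0
        unfolding JJr c_def by (simp add: ennreal_mult'[symmetric])
      have "(\<integral>\<^sup>+x. ennreal c * indicator A x \<partial>\<mu>) < (\<integral>\<^sup>+x. ennreal (w x) * indicator A x \<partial>\<mu>)"
      proof (rule nn_integral_less)
        show "(\<lambda>x. ennreal c * indicator A x) \<in> borel_measurable \<mu>" using Asets by measurable
        show "(\<lambda>x. ennreal (w x) * indicator A x) \<in> borel_measurable \<mu>" using Asets wm by measurable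
        show "(\<integral>\<^sup>+x. ennreal c * indicator A x \<partial>\<mu>) \<noteq> \<infinity>" using If False by simp
        show "AE x in \<mu>. ennreal c * indicator A x \<le> ennreal (w x) * indicator A x"
          using AE_not_in[OF ADnull]
        proof eventually_elim
          case (elim x)
          show ?case
          proof (cases "x \<in> A")
            case True
            then have "c < w x" using Hc elim by auto
            then show ?thesis using True by (simp add: ennreal_leI)
          qed simp
        qed
        show "\<not> (AE x in \<mu>. ennreal (w x) * indicator A x \<le> ennreal c * indicator A x)"
        proof
          assume "AE x in \<mu>. ennreal (w x) * indicator A x \<le> ennreal c * indicator A x"
          then have "AE x in \<mu>. x \<notin> A - D"
          proof eventually_elim
            case (elim x)
            show ?case
            proof
              assume x: "x \<in> A - D"
              then have "ennreal (w x) \<le> ennreal c" using elim by simp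
              moreover have "c < w x" using Hc x by auto
              moreover have "0 \<le> c" unfolding c_def using Jr0 \<nu>pos by simp
              ultimately show False using ennreal_le_iff by auto
            qed
          qed
          then have "emeasure \<mu> (A - D) = 0"
            using AE_iff_measurable[of "A - D" \<mu> "\<lambda>x. x \<notin> A - D"] Asets Dsets space_mu by auto
          with ADpos show False by simp
        qed
      qed
      then show False using If unfolding J_def by simp
    qed
  qed
qed

lemma Phi_mono: "a \<le> s \<Longrightarrow> s \<le> t \<Longrightarrow> t \<le> b \<Longrightarrow> measure \<mu> (\<gamma>`{a..s}) \<le> measure \<mu> (\<gamma>`{a..t})"
  by (intro mono_meas) auto

lemma chain:
  assumes u: "continuous_on UNIV u" and w: "w \<in> borel_measurable borel" "\<And>x. 0 \<le> w x"
    and D: "D \<in> sets borel" "emeasure \<mu> (\<gamma>`{a..b} \<inter> D) = 0"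
    and hj: "\<And>x y. x \<notin> D \<Longrightarrow> y \<notin> D \<Longrightarrow> \<bar>u x - u y\<bar> \<le> dist x y powr \<beta> * (w x + w y)"
  shows "\<exists>z\<in>{a..b}. \<gamma> z \<notin> D \<and>
     ennreal (w (\<gamma> z) * measure \<mu> (\<gamma>`{a..b})) \<le> 2 * (\<integral>\<^sup>+x\<in>\<gamma>`{a..b}. ennreal (w x) \<partial>\<mu>) \<and>
     ennreal \<bar>u (\<gamma> a) - u (\<gamma> z)\<bar> \<le> ennreal (9/2 * C) * (\<integral>\<^sup>+x\<in>\<gamma>`{a..b}. ennreal (w x) \<partial>\<mu>)"
proof -
  define \<Phi> where "\<Phi> t = measure \<mu> (\<gamma>`{a..t})" for t
  define V where "V = \<Phi> b"
  define I where "I = (\<integral>\<^sup>+x\<in>\<gamma>`{a..b}. ennreal (w x) \<partial>\<mu>)"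
  define J where "J s t = (\<integral>\<^sup>+x\<in>\<gamma>`{s..t}. ennreal (w x) \<partial>\<mu>)" for s t
  have Vpos: "0 < V" unfolding V_def \<Phi>_def using meas_pos[of a b] ab by simp
  have "\<exists>t. a \<le> t \<and> t \<le> b \<and> \<Phi> t = V / 2^k" for k
  proof (rule IVT')
    show "\<Phi> a \<le> V / 2^k" unfolding \<Phi>_def using Phi_a Vpos by simp
    show "V / 2^k \<le> \<Phi> b" using Vpos unfolding V_def
      using mult_left_mono[of 1 "2^k" "\<Phi> b"] by (simp add: divide_le_eq)
    show "a \<le> b" using ab by simp
    show "continuous_on {a..b} \<Phi>" unfolding \<Phi>_def by (rule Phi_cont)
  qed
  then obtain s where s: "\<And>k. a \<le> s k" "\<And>k. s k \<le> b" "\<And>k. \<Phi> (s k) = V / 2^k"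
    by metis
  have sdec: "s (Suc k) < s k" for k
  proof (rule ccontr)
    assume "\<not> ?thesis"
    then have "\<Phi> (s k) \<le> \<Phi> (s (Suc k))" unfolding \<Phi>_def using s by (intro Phi_mono) auto
    then show False using s(3)[of k] s(3)[of "Suc k"] Vpos by (simp add: field_simps)
  qed
  have "decseq s" by (rule decseq_SucI) (use sdec in \<open>auto intro: less_imp_le\<close>)
  then have smono: "m \<le> n \<Longrightarrow> s n \<le> s m" for m n by (simp add: decseqD)
  have mB: "measure \<mu> (\<gamma>`{s (Suc k)..s k}) = V / 2^Suc k" for k
    using add[of a "s (Suc k)" "s k"] s[of k] s[of "Suc k"] sdec[of k] unfolding \<Phi>_def by auto
  have mB2: "measure \<mu> (\<gamma>`{s (Suc (Suc k))..s k}) = 3 * V / 2^(Suc (Suc k))" for k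
    using add[of a "s (Suc (Suc k))" "s k"] s[of k] s[of "Suc (Suc k)"] sdec[of k] sdec[of "Suc k"]
    unfolding \<Phi>_def by (auto simp: field_simps)
  have "\<exists>r. r \<in> {s (Suc k)..s k} \<and> \<gamma> r \<notin> D \<and> ennreal (w (\<gamma> r) * (V / 2^Suc k)) \<le> J (s (Suc k)) (s k)" for k
    using avg[OF w D s(1)[of "Suc k"] sdec[of k] s(2)[of k]] mB[of k] unfolding J_def by auto
  then obtain r where r: "\<And>k. r k \<in> {s (Suc k)..s k}" "\<And>k. \<gamma> (r k) \<notin> D"
     "\<And>k. ennreal (w (\<gamma> (r k)) * (V / 2^Suc k)) \<le> J (s (Suc k)) (s k)"
    by metis
  have rab: "r k \<in> {a..b}" for k using r(1)[of k] s(1)[of "Suc k"] s(2)[of k] by auto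
  have psum: "(\<Sum>k<n. J (s (Suc (k + m))) (s (k + m))) = J (s (n + m)) (s m)" for n m
  proof (induction n)
    case 0
    then show ?case unfolding J_def using noatom
      by (simp add: nn_integral_cmult_indicator pt_sets)
  next
    case (Suc n)
    have "J (s (Suc n + m)) (s m) = J (s (Suc (n + m))) (s (n + m)) + J (s (n + m)) (s m)"
      unfolding J_def using set_add[OF meas_borel s(1)[of "Suc(n+m)"] less_imp_le[OF sdec[of "n+m"]] smono[of m "n+m"] s(2)[of m], of "\<lambda>x. ennreal (w x)"] w
      by simp
    then show ?case using Suc by (simp add: add.commute)
  qed
  have Jle: "J (s n') (s m) \<le> I" for n' m
    unfolding J_def I_def using s by (intro set_mono_int) auto
  have step: "ennreal \<bar>u (\<gamma> (r k)) - u (\<gamma> (r (Suc k)))\<bar> \<le>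
      ennreal (3/2 * C) * J (s (Suc k)) (s k) + ennreal (3 * C) * J (s (Suc (Suc k))) (s (Suc k))" for k
  proof -
    define x where "x = \<gamma> (r k)"
    define y where "y = \<gamma> (r (Suc k))"
    have a2: "a \<le> s (Suc (Suc k))" "s k \<le> b" using s by auto
    have lt2: "s (Suc (Suc k)) < s k" using sdec[of k] sdec[of "Suc k"] by simp
    have xin: "x \<in> \<gamma>`{s (Suc (Suc k))..s k}" unfolding x_def using r(1)[of k] sdec[of "Suc k"] by auto
    have yin: "y \<in> \<gamma>`{s (Suc (Suc k))..s k}" unfolding y_def using r(1)[of "Suc k"] sdec[of k] by auto
    have "dist x y \<le> diameter (\<gamma>`{s (Suc (Suc k))..s k})"
      using xin yin a2 by (intro diameter_bounded_bound compact_imp_bounded img_compact) auto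
    then have "dist x y powr \<beta> \<le> diameter (\<gamma>`{s (Suc (Suc k))..s k}) powr \<beta>"
      using beta by (intro powr_mono2) auto
    also have "\<dots> \<le> C * (3 * V / 2^(Suc (Suc k)))" using ac[OF a2(1) lt2 a2(2)] mB2[of k] by simp
    finally have dd: "dist x y powr \<beta> \<le> C * (3 * V / 2^(Suc (Suc k)))" .
    have "\<bar>u x - u y\<bar> \<le> dist x y powr \<beta> * (w x + w y)" using hj r(2) unfolding x_def y_def by auto
    also have "\<dots> \<le> C * (3 * V / 2^(Suc (Suc k))) * (w x + w y)"
      using dd w(2)[of x] w(2)[of y] by (intro mult_right_mono) auto
    also have "\<dots> = 3/2 * C * (w x * (V / 2^Suc k)) + 3 * C * (w y * (V / 2^Suc (Suc k)))"
      by (simp add: field_simps)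
    finally have re: "\<bar>u x - u y\<bar> \<le> 3/2 * C * (w x * (V / 2^Suc k)) + 3 * C * (w y * (V / 2^Suc (Suc k)))" .
    have nn1: "0 \<le> w x * (V / 2^Suc k)" "0 \<le> w y * (V / 2^Suc (Suc k))" using w(2) Vpos by auto
    have "ennreal \<bar>u x - u y\<bar> \<le> ennreal (3/2 * C * (w x * (V / 2^Suc k)) + 3 * C * (w y * (V / 2^Suc (Suc k))))"
      using re by (rule ennreal_leI)
    also have "\<dots> = ennreal (3/2 * C) * ennreal (w x * (V / 2^Suc k)) + ennreal (3 * C) * ennreal (w y * (V / 2^Suc (Suc k)))"
      using nn1 Cpos by (intro ennreal_lin) auto
    also have "\<dots> \<le> ennreal (3/2 * C) * J (s (Suc k)) (s k) + ennreal (3 * C) * J (s (Suc (Suc k))) (s (Suc k))"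
      using r(3)[of k] r(3)[of "Suc k"] unfolding x_def y_def by (intro add_mono mult_left_mono) auto
    finally show ?thesis unfolding x_def y_def .
  qed
  have tele: "ennreal \<bar>u (\<gamma> (r 0)) - u (\<gamma> (r n))\<bar> \<le> ennreal (9/2 * C) * I" for n
  proof -
    have tr: "\<bar>u (\<gamma> (r 0)) - u (\<gamma> (r n))\<bar> \<le> (\<Sum>k<n. \<bar>u (\<gamma> (r k)) - u (\<gamma> (r (Suc k)))\<bar>)"
    proof (induction n)
      case (Suc n)
      then show ?case by simp
    qed simp
    have "ennreal \<bar>u (\<gamma> (r 0)) - u (\<gamma> (r n))\<bar> \<le> ennreal (\<Sum>k<n. \<bar>u (\<gamma> (r k)) - u (\<gamma> (r (Suc k)))\<bar>)"
      using tr by (rule ennreal_leI)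
    also have "\<dots> = (\<Sum>k<n. ennreal \<bar>u (\<gamma> (r k)) - u (\<gamma> (r (Suc k)))\<bar>)"
      by (rule sum_ennreal[symmetric]) simp
    also have "\<dots> \<le> (\<Sum>k<n. ennreal (3/2 * C) * J (s (Suc k)) (s k) + ennreal (3 * C) * J (s (Suc (Suc k))) (s (Suc k)))"
      by (intro sum_mono step)
    also have "\<dots> = ennreal (3/2 * C) * (\<Sum>k<n. J (s (Suc (k + 0))) (s (k + 0))) + ennreal (3 * C) * (\<Sum>k<n. J (s (Suc (k + 1))) (s (k + 1)))"
      by (simp add: sum.distrib sum_distrib_left)
    also have "\<dots> \<le> ennreal (3/2 * C) * I + ennreal (3 * C) * I"
      unfolding psum by (intro add_mono mult_left_mono Jle) auto
    also have "\<dots> = ennreal (9/2 * C) * I"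
      using Cpos by (simp add: distrib_right[symmetric] ennreal_plus[symmetric] del: ennreal_plus)
    finally show ?thesis .
  qed
  have rlim: "r \<longlonglongrightarrow> a"
  proof (rule LIMSEQ_I)
    fix e :: real assume e: "0 < e"
    show "\<exists>no. \<forall>n\<ge>no. norm (r n - a) < e"
    proof (cases "b < a + e")
      case True
      show ?thesis
      proof (intro exI[of _ 0] allI impI)
        fix n :: nat show "norm (r n - a) < e" using rab[of n] True by auto
      qed
    next
      case False
      then have "0 < \<Phi> (a + e)" unfolding \<Phi>_def using Phi_strict[of a "a+e"] Phi_a e by auto
      moreover obtain N where N: "V / \<Phi> (a + e) < 2^N" using real_arch_pow[of 2] by auto
      ultimately have VN: "V / 2^N < \<Phi> (a + e)" by (simp add: field_simps)
      show ?thesis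
      proof (intro exI[of _ N] allI impI)
        fix n assume n: "N \<le> n"
        have "V / 2^n \<le> V / 2^N" using n Vpos by (intro divide_left_mono) auto
        then have "\<Phi> (s n) < \<Phi> (a + e)" using VN s(3)[of n] by simp
        then have "s n < a + e" unfolding \<Phi>_def using Phi_mono[of "a+e" "s n"] e False s(2)[of n] by (cases "s n < a + e") auto
        then show "norm (r n - a) < e" using r(1)[of n] sdec[of n] rab[of n] by auto
      qed
    qed
  qed
  have ulim: "(\<lambda>n. u (\<gamma> (r n))) \<longlonglongrightarrow> u (\<gamma> a)"
  proof (rule continuous_on_tendsto_compose[OF _ rlim])
    show "continuous_on {a..b} (\<lambda>t. u (\<gamma> t))"
      by (rule continuous_on_compose2[OF u cont]) auto
  qed (use rab ab in auto)
  have fin_part: "ennreal \<bar>u (\<gamma> a) - u (\<gamma> (r 0))\<bar> \<le> ennreal (9/2 * C) * I"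
  proof (cases "I = \<infinity>")
    case True
    then show ?thesis using Cpos by (simp add: ennreal_mult_top)
  next
    case False
    define B where "B = 9/2 * C * enn2real I"
    have B0: "0 \<le> B" unfolding B_def using Cpos by simp
    have eB: "ennreal (9/2 * C) * I = ennreal B"
      unfolding B_def using False Cpos ennreal_mult[of "9/2*C" "enn2real I"] by (simp add: ennreal_enn2real_if)
    have "\<bar>u (\<gamma> (r 0)) - u (\<gamma> (r n))\<bar> \<le> B" for n
      using tele[of n] B0 unfolding eB by (simp add: ennreal_le_iff)
    moreover have "(\<lambda>n. \<bar>u (\<gamma> (r 0)) - u (\<gamma> (r n))\<bar>) \<longlonglongrightarrow> \<bar>u (\<gamma> (r 0)) - u (\<gamma> a)\<bar>"
      by (intro tendsto_intros ulim)
    ultimately have "\<bar>u (\<gamma> (r 0)) - u (\<gamma> a)\<bar> \<le> B"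
      by (intro LIMSEQ_le_const2) auto
    then show ?thesis unfolding eB by (simp add: abs_minus_commute ennreal_leI)
  qed
  have z1: "ennreal (w (\<gamma> (r 0)) * measure \<mu> (\<gamma>`{a..b})) \<le> 2 * I"
  proof -
    have "ennreal (w (\<gamma> (r 0)) * measure \<mu> (\<gamma>`{a..b})) = 2 * ennreal (w (\<gamma> (r 0)) * (V / 2^Suc 0))"
      unfolding V_def \<Phi>_def using w(2)[of "\<gamma> (r 0)"] Vpos ennreal_two[of "w (\<gamma> (r 0)) * measure \<mu> (\<gamma>`{a..b})"] by simp
    also have "\<dots> \<le> 2 * I" using r(3)[of 0] Jle[of 1 0] by (intro mult_left_mono) auto
    finally show ?thesis .
  qed
  show ?thesis using rab[of 0] r(2)[of 0] z1 fin_part unfolding I_def by blast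
qed

lemma sub: "a \<le> c \<Longrightarrow> c < d \<Longrightarrow> d \<le> b \<Longrightarrow> gpath \<mu> \<beta> C c d \<gamma>"
proof unfold_locales
  assume h: "a \<le> c" "c < d" "d \<le> b"
  show "continuous_on {c..d} \<gamma>" using h by (intro continuous_on_subset[OF cont]) auto
  show "inj_on \<gamma> {c..d}" using h by (intro inj_on_subset[OF inj]) auto
  show "0 < emeasure \<mu> (\<gamma> ` {s..t})" if "c \<le> s" "s < t" "t \<le> d" for s t
    using h that by (intro pos) auto
  show "emeasure \<mu> (\<gamma> ` {s..t}) < \<infinity>" if "c \<le> s" "s < t" "t \<le> d" for s t
    using h that by (intro fin') auto
  show "diameter (\<gamma> ` {s..t}) powr \<beta> \<le> C * measure \<mu> (\<gamma> ` {s..t})" if "c \<le> s" "s < t" "t \<le> d" for s t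
    using h that by (intro ac) auto
qed (use sets_mu noatom beta Cpos in auto)

lemma img_neg: "(\<lambda>t. \<gamma> (- t)) ` {s..t} = \<gamma> ` {-t..-s}"
proof -
  have "\<gamma> ` {-t..-s} = \<gamma> ` (uminus ` {s..t})" by simp
  also have "\<dots> = (\<lambda>t. \<gamma> (- t)) ` {s..t}" by (simp only: image_image)
  finally show ?thesis by simp
qed

lemma rev: "gpath \<mu> \<beta> C (-b) (-a) (\<lambda>t. \<gamma> (- t))"
proof unfold_locales
  show "continuous_on {- b..- a} (\<lambda>t. \<gamma> (- t))"
    by (rule continuous_on_compose2[OF cont]) (auto intro: continuous_intros)
  show "inj_on (\<lambda>t. \<gamma> (- t)) {- b..- a}"
    unfolding inj_on_def
  proof (intro ballI impI)
    fix x y assume "x \<in> {-b..-a}" "y \<in> {-b..-a}" "\<gamma> (-x) = \<gamma> (-y)"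
    then have "-x = -y" using inj_onD[OF inj, of "-x" "-y"] by auto
    then show "x = y" by simp
  qed
qed (auto simp: img_neg intro!: pos fin_top ac sets_mu noatom beta Cpos ab)

end

lemma (in gpath) path_bound:
  assumes u: "continuous_on UNIV u" and w: "w \<in> borel_measurable borel" "\<And>x. 0 \<le> w x"
    and D: "D \<in> sets borel" "emeasure \<mu> (\<gamma>`{a..b} \<inter> D) = 0"
    and hj: "\<And>x y. x \<notin> D \<Longrightarrow> y \<notin> D \<Longrightarrow> \<bar>u x - u y\<bar> \<le> dist x y powr \<beta> * (w x + w y)"
  shows "ennreal \<bar>u (\<gamma> a) - u (\<gamma> b)\<bar> \<le> ennreal (9 * C) * (\<integral>\<^sup>+x\<in>\<gamma>`{a..b}. ennreal (w x) \<partial>\<mu>)"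
proof -
  define V where "V = measure \<mu> (\<gamma>`{a..b})"
  have Vpos: "0 < V" unfolding V_def using meas_pos[of a b] ab by simp
  have "\<exists>c. a \<le> c \<and> c \<le> b \<and> measure \<mu> (\<gamma>`{a..c}) = V / 2"
    by (rule IVT') (use Phi_a Vpos Phi_cont ab in \<open>auto simp: V_def\<close>)
  then obtain c where c: "a \<le> c" "c \<le> b" "measure \<mu> (\<gamma>`{a..c}) = V / 2" by blast
  have ac': "a < c" using c Vpos Phi_a by (cases "a = c") auto
  have cb: "c < b" using c Vpos unfolding V_def by (cases "c = b") auto
  have mR: "measure \<mu> (\<gamma>`{c..b}) = V / 2" using add[of a c b] c unfolding V_def by auto
  have Dsets: "D \<in> sets \<mu>" using D sets_mu by simp
  have Dsub: "emeasure \<mu> (\<gamma>`{s..t} \<inter> D) = 0" if "a \<le> s" "t \<le> b" for s t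
  proof -
    have "emeasure \<mu> (\<gamma>`{s..t} \<inter> D) \<le> emeasure \<mu> (\<gamma>`{a..b} \<inter> D)"
      using that img_sets[of a b] Dsets by (intro emeasure_mono) auto
    then show ?thesis using D by simp
  qed
  define IL where "IL = (\<integral>\<^sup>+x\<in>\<gamma>`{a..c}. ennreal (w x) \<partial>\<mu>)"
  define IR where "IR = (\<integral>\<^sup>+x\<in>\<gamma>`{c..b}. ennreal (w x) \<partial>\<mu>)"
  have Isplit: "(\<integral>\<^sup>+x\<in>\<gamma>`{a..b}. ennreal (w x) \<partial>\<mu>) = IL + IR"
    unfolding IL_def IR_def using c w by (intro set_add meas_borel) auto
  obtain z where z: "z \<in> {a..c}" "\<gamma> z \<notin> D" "ennreal (w (\<gamma> z) * (V/2)) \<le> 2 * IL"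
    "ennreal \<bar>u (\<gamma> a) - u (\<gamma> z)\<bar> \<le> ennreal (9/2 * C) * IL"
    using gpath.chain[OF sub[OF order_refl ac' c(2)] u w D(1) Dsub[OF order_refl c(2)] hj] c(3)
    unfolding IL_def by auto
  obtain y' where y': "y' \<in> {-b..-c}" "\<gamma> (- y') \<notin> D" "ennreal (w (\<gamma> (- y')) * (V/2)) \<le> 2 * IR"
    "ennreal \<bar>u (\<gamma> b) - u (\<gamma> (- y'))\<bar> \<le> ennreal (9/2 * C) * IR"
    using gpath.chain[OF gpath.sub[OF rev, of "-b" "-c"] u w D(1)]
      c ac' cb mR Dsub[OF c(1) order_refl] hj
    unfolding IR_def gpath.img_neg[OF rev] by (auto simp: img_neg)
  define y where "y = - y'"
  have y: "y \<in> {c..b}" "\<gamma> y \<notin> D" "ennreal (w (\<gamma> y) * (V/2)) \<le> 2 * IR"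
    "ennreal \<bar>u (\<gamma> y) - u (\<gamma> b)\<bar> \<le> ennreal (9/2 * C) * IR"
    using y' unfolding y_def by (auto simp: abs_minus_commute)
  have "dist (\<gamma> z) (\<gamma> y) \<le> diameter (\<gamma>`{a..b})"
    using z(1) y(1) c by (intro diameter_bounded_bound compact_imp_bounded img_compact) auto
  then have "dist (\<gamma> z) (\<gamma> y) powr \<beta> \<le> diameter (\<gamma>`{a..b}) powr \<beta>"
    using beta by (intro powr_mono2) auto
  also have "\<dots> \<le> C * V" using ac[of a b] ab unfolding V_def by simp
  finally have dd: "dist (\<gamma> z) (\<gamma> y) powr \<beta> \<le> C * V" .
  have "\<bar>u (\<gamma> z) - u (\<gamma> y)\<bar> \<le> dist (\<gamma> z) (\<gamma> y) powr \<beta> * (w (\<gamma> z) + w (\<gamma> y))"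
    using hj z(2) y(2) by auto
  also have "\<dots> \<le> C * V * (w (\<gamma> z) + w (\<gamma> y))"
    using dd w(2) by (intro mult_right_mono) (auto intro: add_nonneg_nonneg)
  also have "\<dots> = (2*C) * (w (\<gamma> z) * (V/2)) + (2*C) * (w (\<gamma> y) * (V/2))" by (simp add: field_simps)
  finally have mid: "\<bar>u (\<gamma> z) - u (\<gamma> y)\<bar> \<le> (2*C) * (w (\<gamma> z) * (V/2)) + (2*C) * (w (\<gamma> y) * (V/2))" .
  have "ennreal \<bar>u (\<gamma> z) - u (\<gamma> y)\<bar> \<le> ennreal ((2*C) * (w (\<gamma> z) * (V/2)) + (2*C) * (w (\<gamma> y) * (V/2)))"
    using mid by (rule ennreal_leI)
  also have "\<dots> = ennreal (2*C) * ennreal (w (\<gamma> z) * (V/2)) + ennreal (2*C) * ennreal (w (\<gamma> y) * (V/2))"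
    using Cpos Vpos w(2) by (intro ennreal_lin) auto
  also have "\<dots> \<le> ennreal (2*C) * (2 * IL) + ennreal (2*C) * (2 * IR)"
    using z(3) y(3) by (intro add_mono mult_left_mono) auto
  finally have midE: "ennreal \<bar>u (\<gamma> z) - u (\<gamma> y)\<bar> \<le> ennreal (2*C) * (2 * IL) + ennreal (2*C) * (2 * IR)" .
  have "\<bar>u (\<gamma> a) - u (\<gamma> b)\<bar> \<le> \<bar>u (\<gamma> a) - u (\<gamma> z)\<bar> + \<bar>u (\<gamma> z) - u (\<gamma> y)\<bar> + \<bar>u (\<gamma> y) - u (\<gamma> b)\<bar>"
    by linarith
  then have "ennreal \<bar>u (\<gamma> a) - u (\<gamma> b)\<bar> \<le> ennreal \<bar>u (\<gamma> a) - u (\<gamma> z)\<bar> + ennreal \<bar>u (\<gamma> z) - u (\<gamma> y)\<bar> + ennreal \<bar>u (\<gamma> y) - u (\<gamma> b)\<bar>"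
    by (metis (no_types, lifting) abs_ge_zero add_nonneg_nonneg ennreal_leI ennreal_plus)
  also have "\<dots> \<le> ennreal (9/2 * C) * IL + (ennreal (2*C) * (2 * IL) + ennreal (2*C) * (2 * IR)) + ennreal (9/2 * C) * IR"
    using z(4) y(4) midE by (intro add_mono) auto
  also have "\<dots> = (ennreal (9/2 * C) + ennreal (2*C) * 2) * (IL + IR)"
    by (simp add: algebra_simps)
  also have "ennreal (9/2 * C) + ennreal (2*C) * 2 = ennreal (17/2 * C)"
  proof -
    have "ennreal (2*C) * 2 = ennreal (4*C)" using ennreal_mult[of "2*C" 2] Cpos by simp
    moreover have "ennreal (9/2*C) + ennreal (4*C) = ennreal (17/2*C)" using ennreal_plus[of "9/2*C" "4*C"] Cpos by simp
    ultimately show ?thesis by simp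
  qed
  also have "ennreal (17/2 * C) * (IL + IR) \<le> ennreal (9 * C) * (IL + IR)"
    using Cpos by (intro mult_right_mono ennreal_leI) auto
  finally show ?thesis unfolding Isplit .
qed



lemma enn_powr_ennreal: "0 \<le> x \<Longrightarrow> enn_powr (ennreal x) q = ennreal (x powr q)"
  by (simp add: enn_powr_def)

lemma enn_powr_top[simp]: "enn_powr top q = top"
  by (simp add: enn_powr_def)

lemma enn_powr_zero: "0 < q \<Longrightarrow> enn_powr 0 q = 0"
  by (simp add: enn_powr_def)

lemma enn_powr_cases: obtains (top) "x = \<infinity>" | (fin) r where "0 \<le> r" "x = ennreal r"
  by (metis ennreal_cases infinity_ennreal_def)

lemma enn_powr_mono: assumes "0 \<le> q" "x \<le> y" shows "enn_powr x q \<le> enn_powr y q"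
proof (cases y rule: enn_powr_cases)
  case top then show ?thesis by simp
next
  case (fin s)
  have "x \<noteq> top" using assms(2) fin by (auto simp: top_unique)
  then obtain r where r: "0 \<le> r" "x = ennreal r" by (cases x rule: enn_powr_cases) auto
  then have "r \<le> s" using assms(2) fin by simp
  then show ?thesis using fin assms r(1) unfolding r(2) by (simp add: enn_powr_ennreal powr_mono2)
qed

lemma enn_powr_inv1: assumes "0 < p" shows "enn_powr (enn_powr x (1/p)) p = x"
proof (cases x rule: enn_powr_cases)
  case top then show ?thesis by simp
next
  case (fin r)
  then show ?thesis using assms by (simp add: enn_powr_ennreal powr_powr)
qed

lemma enn_powr_inv2: assumes "0 < p" shows "enn_powr (enn_powr x p) (1/p) = x"
proof (cases x rule: enn_powr_cases)
  case top then show ?thesis by simp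
next
  case (fin r)
  then show ?thesis using assms by (simp add: enn_powr_ennreal powr_powr)
qed

lemma enn_powr_cmult: assumes "0 \<le> c" "0 < q"
  shows "enn_powr (ennreal c * x) q = ennreal (c powr q) * enn_powr x q"
proof (cases x rule: enn_powr_cases)
  case top
  show ?thesis
  proof (cases "c = 0")
    case True then show ?thesis using top assms by (simp add: enn_powr_zero)
  next
    case False then show ?thesis using top assms by (simp add: ennreal_mult_top)
  qed
next
  case (fin r)
  have "ennreal c * x = ennreal (c * r)" using fin assms by (simp add: ennreal_mult)
  then have "enn_powr (ennreal c * x) q = ennreal ((c * r) powr q)" using fin assms by (simp add: enn_powr_ennreal)
  also have "\<dots> = ennreal (c powr q) * ennreal (r powr q)" using fin assms by (simp add: powr_mult ennreal_mult)
  finally show ?thesis using fin by (simp add: enn_powr_ennreal)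
qed

lemma enn_powr_measurable[measurable]:
  "f \<in> borel_measurable M \<Longrightarrow> (\<lambda>x. enn_powr (f x) q) \<in> borel_measurable M"
proof -
  assume f: "f \<in> borel_measurable M"
  have e: "enn_powr x q = (if x = top then top else ennreal (enn2real x powr q))" for x
    by (simp add: enn_powr_def)
  show ?thesis unfolding e using f by measurable
qed

lemma enn_powr_add_le: assumes "1 \<le> p"
  shows "enn_powr (x + y) p \<le> ennreal (2 powr p) * (enn_powr x p + enn_powr y p)"
proof -
  have "x + y \<le> ennreal 2 * max x y"
    by (simp add: mult_2 add_mono)
  then have "enn_powr (x + y) p \<le> enn_powr (ennreal 2 * max x y) p"
    using assms by (intro enn_powr_mono) auto
  also have "\<dots> = ennreal (2 powr p) * enn_powr (max x y) p"
    using assms by (intro enn_powr_cmult) auto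
  also have "enn_powr (max x y) p \<le> enn_powr x p + enn_powr y p"
    by (cases "x \<le> y") (auto simp: max_def)
  finally show ?thesis by (simp add: mult_left_mono)
qed

lemma lp_int: "0 < p \<Longrightarrow> enn_powr (lp_enorm m p f) p = (\<integral>\<^sup>+x. enn_powr (f x) p \<partial>m)"
  unfolding lp_enorm_def by (rule enn_powr_inv1)

lemma lp_bound: assumes "0 < p" "0 \<le> B" "(\<integral>\<^sup>+x. enn_powr (f x) p \<partial>m) \<le> ennreal (B powr p)"
  shows "lp_enorm m p f \<le> ennreal B"
proof -
  have "lp_enorm m p f \<le> enn_powr (ennreal (B powr p)) (1/p)"
    unfolding lp_enorm_def using assms by (intro enn_powr_mono) auto
  also have "\<dots> = ennreal B" using assms by (simp add: enn_powr_ennreal powr_powr)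
  finally show ?thesis .
qed

lemma lp_le_int: assumes "0 < p" "0 \<le> e" "lp_enorm m p f \<le> ennreal e"
  shows "(\<integral>\<^sup>+x. enn_powr (f x) p \<partial>m) \<le> ennreal (e powr p)"
proof -
  have "enn_powr (lp_enorm m p f) p \<le> enn_powr (ennreal e) p" using assms by (intro enn_powr_mono) auto
  then show ?thesis using assms by (simp add: lp_int enn_powr_ennreal)
qed

lemma lp_cong_AE: "AE x in m. f x = g x \<Longrightarrow> lp_enorm m p f = lp_enorm m p g"
proof -
  assume "AE x in m. f x = g x"
  then have "AE x in m. enn_powr (f x) p = enn_powr (g x) p" by eventually_elim simp
  then show ?thesis unfolding lp_enorm_def by (simp cong: nn_integral_cong_AE)
qed



lemma pimage_eq[simp]: "pimage (a, b, \<gamma>) = \<gamma> ` {a..b}"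
  by (simp add: pimage_def)

lemma gamma_gpath:
  assumes sm: "sets \<mu> = sets borel" and na: "\<forall>x. emeasure \<mu> {x} = 0"
    and GS: "\<Gamma>s \<subseteq> Gamma_mu \<mu>" and sc: "subpath_closed \<Gamma>s"
    and C0: "0 < C0" and ac0: "\<forall>P\<in>\<Gamma>s. ennreal (diameter (pimage P) powr \<beta>) \<le> ennreal C0 * emeasure \<mu> (pimage P)"
    and beta: "0 < \<beta>" and P: "(a, b, \<gamma>) \<in> \<Gamma>s"
  shows "gpath \<mu> \<beta> C0 a b \<gamma>"
proof -
  have G: "(a, b, \<gamma>) \<in> Gamma_mu \<mu>" using GS P by auto
  then have G': "a < b" "continuous_on {a..b} \<gamma>" "inj_on \<gamma> {a..b}"
    "\<And>c d. a \<le> c \<Longrightarrow> c < d \<Longrightarrow> d \<le> b \<Longrightarrow> 0 < emeasure \<mu> (\<gamma> ` {c..d}) \<and> emeasure \<mu> (\<gamma> ` {c..d}) < \<infinity>"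
    unfolding Gamma_mu_def by auto
  show ?thesis
  proof unfold_locales
    fix s t assume st: "a \<le> s" "s < t" "t \<le> b"
    have "(s, t, \<gamma>) \<in> \<Gamma>s" using sc P st unfolding subpath_closed_def by blast
    then have "ennreal (diameter (\<gamma>`{s..t}) powr \<beta>) \<le> ennreal C0 * emeasure \<mu> (\<gamma>`{s..t})"
      using ac0 by fastforce
    also have "emeasure \<mu> (\<gamma>`{s..t}) = ennreal (measure \<mu> (\<gamma>`{s..t}))"
      using G'(4)[OF st] by (intro emeasure_eq_ennreal_measure) auto
    also have "ennreal C0 * \<dots> = ennreal (C0 * measure \<mu> (\<gamma>`{s..t}))" using C0 by (simp add: ennreal_mult)
    finally show "diameter (\<gamma>`{s..t}) powr \<beta> \<le> C0 * measure \<mu> (\<gamma>`{s..t})"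
      using C0 by (simp add: ennreal_le_iff)
  qed (use sm na G' C0 beta in auto)
qed

lemma cont_ug:
  assumes sm: "sets \<mu> = sets borel" and na: "\<forall>x. emeasure \<mu> {x} = 0"
    and GS: "\<Gamma>s \<subseteq> Gamma_mu \<mu>" and sc: "subpath_closed \<Gamma>s"
    and C0: "0 < C0" and ac0: "\<forall>P\<in>\<Gamma>s. ennreal (diameter (pimage P) powr \<beta>) \<le> ennreal C0 * emeasure \<mu> (pimage P)"
    and beta: "0 < \<beta>" and P: "(a, b, \<gamma>) \<in> \<Gamma>s"
    and u: "continuous_on UNIV u" and w: "w \<in> borel_measurable borel" "\<And>x. 0 \<le> w x"
    and D: "D \<in> sets borel" "emeasure \<mu> (pimage (a, b, \<gamma>) \<inter> D) = 0"
    and hj: "\<And>x y. x \<notin> D \<Longrightarrow> y \<notin> D \<Longrightarrow> \<bar>u x - u y\<bar> \<le> dist x y powr \<beta> * (w x + w y)"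
  shows "ennreal \<bar>u (\<gamma> a) - u (\<gamma> b)\<bar> \<le> ennreal (9 * C0) * path_int \<mu> (a, b, \<gamma>) (\<lambda>x. ennreal (w x))"
  using gpath.path_bound[OF gamma_gpath[OF assms(1-8)] u w D(1) _ hj] D(2)
  unfolding path_int_def by simp



lemma Mod_zero:
  fixes \<mu> m :: "'a::metric_space measure"
  assumes sm: "sets m = sets borel" and smu: "sets \<mu> = sets borel" and p: "0 < p"
    and N: "N \<in> sets borel" "emeasure m N = 0"
    and G: "G \<in> borel_measurable borel" and Gfin: "(\<integral>\<^sup>+x. enn_powr (G x) p \<partial>m) \<noteq> \<infinity>"
    and Pm: "\<And>P. P \<in> \<Gamma>0 \<Longrightarrow> pimage P \<in> sets borel"
    and bad: "\<And>P. P \<in> \<Gamma>0 \<Longrightarrow> 0 < emeasure \<mu> (pimage P \<inter> N) \<or> path_int \<mu> P G = \<infinity>"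
  shows "Mod \<mu> m p \<Gamma>0 = 0"
proof -
  define X where "X = (\<integral>\<^sup>+x. enn_powr (G x) p \<partial>m)"
  define Xr where "Xr = enn2real X"
  have XXr: "X = ennreal Xr" unfolding Xr_def X_def using Gfin by (simp add: ennreal_enn2real_if)
  have Xr0: "0 \<le> Xr" unfolding Xr_def by simp
  have Gm: "G \<in> borel_measurable m" by (subst measurable_cong_sets[OF sm refl]) (rule G)
  have Gmu: "G \<in> borel_measurable \<mu>" by (subst measurable_cong_sets[OF smu refl]) (rule G)
  have Nm: "N \<in> null_sets m" using N sm by (auto simp: null_sets_def)
  have key: "Mod \<mu> m p \<Gamma>0 \<le> 0 + ennreal \<delta>" if \<delta>: "0 < \<delta>" for \<delta>
  proof -
    define c where "c = (\<delta> / (Xr + 1)) powr (1/p)"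
    have c0: "0 < c" unfolding c_def using \<delta> Xr0 by simp
    have cp: "c powr p = \<delta> / (Xr + 1)" unfolding c_def using \<delta> Xr0 p by (simp add: powr_powr)
    define T where "T x = (if x \<in> N then \<infinity> else ennreal c * G x)" for x
    have Tm: "T \<in> borel_measurable borel"
      unfolding T_def using N G by measurable
    have adm: "1 \<le> path_int \<mu> P T" if P: "P \<in> \<Gamma>0" for P
    proof -
      have PN: "pimage P \<inter> N \<in> sets \<mu>" using Pm[OF P] N smu by auto
      have Pmu: "pimage P \<in> sets \<mu>" using Pm[OF P] smu by auto
      have "path_int \<mu> P T = \<infinity>"
      proof (cases "0 < emeasure \<mu> (pimage P \<inter> N)")
        case True
        have "(\<integral>\<^sup>+x. \<infinity> * indicator (pimage P \<inter> N) x \<partial>\<mu>) \<le> path_int \<mu> P T"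
          unfolding path_int_def by (intro nn_integral_mono) (auto simp: T_def split: split_indicator)
        moreover have "(\<integral>\<^sup>+x. \<infinity> * indicator (pimage P \<inter> N) x \<partial>\<mu>) = \<infinity>"
          using True PN by (simp add: nn_integral_cmult_indicator ennreal_mult_top)
        ultimately show ?thesis by (simp add: top_unique)
      next
        case False
        then have PG: "path_int \<mu> P G = \<infinity>" using bad[OF P] by auto
        have "(\<integral>\<^sup>+x. ennreal c * (G x * indicator (pimage P) x) \<partial>\<mu>) \<le> path_int \<mu> P T"
          unfolding path_int_def by (intro nn_integral_mono) (auto simp: T_def split: split_indicator)
        moreover have "(\<integral>\<^sup>+x. ennreal c * (G x * indicator (pimage P) x) \<partial>\<mu>) = ennreal c * path_int \<mu> P G"
          unfolding path_int_def using Gmu Pmu by (intro nn_integral_cmult borel_measurable_times_ennreal borel_measurable_indicator)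
        ultimately show ?thesis using PG c0 by (simp add: ennreal_mult_top top_unique)
      qed
      then show ?thesis by simp
    qed
    have "Mod \<mu> m p \<Gamma>0 \<le> (\<integral>\<^sup>+x. enn_powr (T x) p \<partial>m)"
      unfolding Mod_def using Tm adm by (intro INF_lower) auto
    also have "\<dots> = (\<integral>\<^sup>+x. ennreal (c powr p) * enn_powr (G x) p \<partial>m)"
    proof (rule nn_integral_cong_AE)
      show "AE x in m. enn_powr (T x) p = ennreal (c powr p) * enn_powr (G x) p"
        using AE_not_in[OF Nm] by eventually_elim (use c0 p in \<open>simp add: T_def enn_powr_cmult\<close>)
    qed
    also have "\<dots> = ennreal (c powr p) * X"
      unfolding X_def using Gm by (intro nn_integral_cmult) measurable
    also have "\<dots> = ennreal (\<delta> / (Xr + 1)) * ennreal Xr" by (simp only: cp XXr)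
    also have "\<dots> = ennreal (\<delta> / (Xr + 1) * Xr)" by (rule ennreal_mult[symmetric]) (use \<delta> Xr0 in auto)
    also have "\<dots> \<le> ennreal \<delta>"
    proof (intro ennreal_leI)
      have "\<delta> / (Xr + 1) * Xr \<le> \<delta> / (Xr + 1) * (Xr + 1)" using \<delta> Xr0 by (intro mult_left_mono) auto
      also have "\<dots> = \<delta>" using Xr0 by simp
      finally show "\<delta> / (Xr + 1) * Xr \<le> \<delta>" .
    qed
    finally show ?thesis by simp
  qed
  have "Mod \<mu> m p \<Gamma>0 \<le> 0"
  proof (rule ennreal_le_epsilon)
    fix e :: real assume "0 < e" then show "Mod \<mu> m p \<Gamma>0 \<le> 0 + ennreal e" by (rule key)
  qed
  then show ?thesis by simp
qed



lemma term_bound: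
  assumes p: "1 \<le> p" and hm: "h \<in> borel_measurable m" and h0: "\<And>x. 0 \<le> h x"
    and lp: "lp_enorm m p (\<lambda>x. ennreal (h x)) \<le> ennreal \<epsilon>" and e: "0 \<le> \<epsilon>" and c: "0 \<le> c"
  shows "(\<integral>\<^sup>+x. enn_powr (ennreal (c * h x)) p \<partial>m) \<le> ennreal ((c * \<epsilon>) powr p)"
proof -
  have "(\<integral>\<^sup>+x. enn_powr (ennreal (c * h x)) p \<partial>m) = (\<integral>\<^sup>+x. ennreal (c powr p) * enn_powr (ennreal (h x)) p \<partial>m)"
    using p c h0 by (intro nn_integral_cong) (simp add: ennreal_mult enn_powr_cmult)
  also have "\<dots> = ennreal (c powr p) * (\<integral>\<^sup>+x. enn_powr (ennreal (h x)) p \<partial>m)"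
    using hm by (intro nn_integral_cmult) measurable
  also have "\<dots> \<le> ennreal (c powr p) * ennreal (\<epsilon> powr p)"
    using lp_le_int[OF _ e lp] p by (intro mult_left_mono) auto
  also have "\<dots> = ennreal ((c * \<epsilon>) powr p)"
    using c e by (simp add: powr_mult ennreal_mult)
  finally show ?thesis .
qed

lemma geom_bound:
  assumes p: "1 \<le> p" and M: "0 \<le> (Mr::real)"
  shows "(Mr / 2^k) powr p \<le> Mr powr p / 2^k"
proof -
  have "(2::real)^k = (2^k) powr 1" by simp
  also have "\<dots> \<le> (2^k) powr p" using p by (intro powr_mono) auto
  finally have k: "(2::real)^k \<le> (2^k) powr p" .
  have "(Mr / 2^k) powr p = Mr powr p / (2^k) powr p" using M by (simp add: powr_divide)
  also have "\<dots> \<le> Mr powr p / 2^k" using k by (intro divide_left_mono) auto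
  finally show ?thesis .
qed

lemma real_final:
  assumes p: "1 \<le> p" and K: "0 \<le> K" and M: "0 \<le> (Mr::real)"
  shows "K powr p * 2 powr p * ((2*Mr) powr p + 2 * Mr powr p) \<le> (8*K*Mr) powr p"
proof -
  have t2: "2 \<le> (2::real) powr p"
    using powr_mono[OF p, of 2] by simp
  have "(2::real) powr p + 2 \<le> 2 powr p * 2 powr p"
  proof -
    have "(2::real) powr p + 2 \<le> 2 powr p + 2 powr p" using t2 by simp
    also have "\<dots> = 2 * 2 powr p" by simp
    also have "\<dots> \<le> 2 powr p * 2 powr p" using t2 by (intro mult_right_mono) auto
    finally show ?thesis .
  qed
  then have key: "(2::real) powr p * Mr powr p + 2 * Mr powr p \<le> 2 powr p * 2 powr p * Mr powr p"
  proof -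
    have "((2::real) powr p + 2) * Mr powr p \<le> (2 powr p * 2 powr p) * Mr powr p"
      using \<open>2 powr p + 2 \<le> 2 powr p * 2 powr p\<close> by (rule mult_right_mono) simp
    then show ?thesis by (simp add: algebra_simps)
  qed
  have "K powr p * 2 powr p * ((2*Mr) powr p + 2 * Mr powr p)
      = K powr p * 2 powr p * (2 powr p * Mr powr p + 2 * Mr powr p)"
    using M by (simp add: powr_mult)
  also have "\<dots> \<le> K powr p * 2 powr p * (2 powr p * 2 powr p * Mr powr p)"
    using key by (intro mult_left_mono) auto
  also have "\<dots> = (8::real) powr p * K powr p * Mr powr p"
  proof -
    have "(8::real) powr p = 2 powr p * (2 powr p * 2 powr p)"
      using powr_mult[of 2 4 p] powr_mult[of 2 2 p] by simp
    then show ?thesis by (simp add: algebra_simps)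
  qed
  also have "\<dots> = (8*K*Mr) powr p"
    using K M by (simp add: powr_mult)
  finally show ?thesis .
qed



lemma main_pos:
  fixes \<mu> m :: "'a::metric_space measure" and p \<beta> :: real and \<Gamma>s :: "'a rpath set"
  assumes smu: "sets \<mu> = sets borel" and na: "\<forall>x. emeasure \<mu> {x} = 0"
    and sm: "sets m = sets borel" and p1: "1 \<le> p" and beta: "0 < \<beta>"
    and GS: "\<Gamma>s \<subseteq> Gamma_mu \<mu>" and sc: "subpath_closed \<Gamma>s"
    and C0: "0 < C0" and ac0: "\<forall>P\<in>\<Gamma>s. ennreal (diameter (pimage P) powr \<beta>) \<le> ennreal C0 * emeasure \<mu> (pimage P)"
    and dens: "continuous_dense_in_Hajlasz m \<beta> p"
    and f: "f \<in> Hajlasz m \<beta> p" and M0: "M_norm m \<beta> p f \<noteq> 0"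
  shows "\<exists>f'. (AE x in m. f' x = f x) \<and> f' \<in> Ntilde \<Gamma>s \<mu> m p \<and>
     N_norm \<Gamma>s \<mu> m p f' \<le> ennreal (72 * C0 + 1) * M_norm m \<beta> p f"
proof -
  define K where "K = 9 * C0"
  have K0: "0 < K" unfolding K_def using C0 by simp
  have p0: "0 < p" using p1 by simp
  have mcong: "\<And>N. measurable m N = measurable borel N" using measurable_cong_sets[OF sm refl] .
  have mucong: "\<And>N. measurable \<mu> N = measurable borel N" using measurable_cong_sets[OF smu refl] .
  have spm: "space m = UNIV" using sets_eq_imp_space_eq[OF sm] by simp
  define M where "M = M_norm m \<beta> p f"
  have fLp: "in_Lp m p f" and "\<exists>g. hajlasz_gradient m \<beta> p f g" using f unfolding Hajlasz_def by auto
  then obtain g0 where g0: "hajlasz_gradient m \<beta> p f g0" by blast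
  have fm: "f \<in> borel_measurable borel" using fLp unfolding in_Lp_def mcong by simp
  define INFg where "INFg = (INF g\<in>{g. hajlasz_gradient m \<beta> p f g}. lp_enorm m p (\<lambda>x. ennreal (g x)))"
  have MM: "M = lp_enorm m p (\<lambda>x. ennreal \<bar>f x\<bar>) + INFg" unfolding M_def M_norm_def INFg_def ..
  have INFle: "INFg \<le> M" unfolding MM by (simp add: add_increasing)
  have lpf: "lp_enorm m p (\<lambda>x. ennreal \<bar>f x\<bar>) \<le> M" unfolding MM by (simp add: add_increasing2)
  have Mfin: "M < \<infinity>"
  proof -
    have "INFg \<le> lp_enorm m p (\<lambda>x. ennreal (g0 x))" unfolding INFg_def using g0 by (intro INF_lower) auto
    also have "(\<lambda>x. ennreal (g0 x)) = (\<lambda>x. ennreal \<bar>g0 x\<bar>)"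
      using g0 unfolding hajlasz_gradient_def by auto
    also have "lp_enorm m p (\<lambda>x. ennreal \<bar>g0 x\<bar>) < \<infinity>" using g0 unfolding hajlasz_gradient_def in_Lp_def by blast
    finally have "INFg < \<infinity>" .
    then show ?thesis using fLp unfolding MM in_Lp_def by (simp add: less_top)
  qed
  define Mr where "Mr = enn2real M"
  have MMr: "M = ennreal Mr" unfolding Mr_def using Mfin by (simp add: ennreal_enn2real_if less_top)
  have Mr0: "0 < Mr" using M0 MMr unfolding M_def by (metis ennreal_0 enn2real_nonneg Mr_def less_eq_real_def)
  have "ennreal Mr < ennreal (2 * Mr)" using Mr0 by (intro ennreal_lessI) auto
  then have "INFg < ennreal (2 * Mr)" using INFle unfolding MMr by (rule le_less_trans[rotated])
  then obtain g where g: "hajlasz_gradient m \<beta> p f g" "lp_enorm m p (\<lambda>x. ennreal (g x)) < ennreal (2 * Mr)"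
    unfolding INFg_def INF_less_iff by auto
  from g(1) have g0': "\<And>x. 0 \<le> g x" and gm: "g \<in> borel_measurable borel"
    unfolding hajlasz_gradient_def in_Lp_def mcong by auto
  from g(1) obtain E0 where E0: "E0 \<in> sets borel" "emeasure m E0 = 0"
    "\<And>x y. x \<notin> E0 \<Longrightarrow> y \<notin> E0 \<Longrightarrow> \<bar>f x - f y\<bar> \<le> dist x y powr \<beta> * (g x + g y)"
    unfolding hajlasz_gradient_def sm by blast
  define \<epsilon> where "\<epsilon> n = Mr / (real (Suc n) * 2^Suc n)" for n
  have \<epsilon>pos: "0 < \<epsilon> n" for n unfolding \<epsilon>_def using Mr0 by simp
  have "\<exists>T. continuous_on UNIV (fst T) \<and> hajlasz_gradient m \<beta> p (\<lambda>x. f x - fst T x) (snd T) \<and>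
      lp_enorm m p (\<lambda>x. ennreal \<bar>f x - fst T x\<bar>) < ennreal (\<epsilon> n) \<and> lp_enorm m p (\<lambda>x. ennreal (snd T x)) < ennreal (\<epsilon> n)" for n
  proof -
    obtain u where u: "continuous_on UNIV u" "M_norm m \<beta> p (\<lambda>x. f x - u x) < ennreal (\<epsilon> n)"
      using dens f \<epsilon>pos[of n] unfolding continuous_dense_in_Hajlasz_def by blast
    define A where "A = lp_enorm m p (\<lambda>x. ennreal \<bar>f x - u x\<bar>)"
    define B where "B = (INF h\<in>{h. hajlasz_gradient m \<beta> p (\<lambda>x. f x - u x) h}. lp_enorm m p (\<lambda>x. ennreal (h x)))"
    have AB: "A + B < ennreal (\<epsilon> n)" using u(2) unfolding M_norm_def A_def B_def by simp
    then have "A < ennreal (\<epsilon> n)" by (rule le_less_trans[rotated]) (simp add: add_increasing2)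
    moreover have "B < ennreal (\<epsilon> n)" using AB by (rule le_less_trans[rotated]) (simp add: add_increasing)
    then obtain h where "hajlasz_gradient m \<beta> p (\<lambda>x. f x - u x) h" "lp_enorm m p (\<lambda>x. ennreal (h x)) < ennreal (\<epsilon> n)"
      unfolding B_def INF_less_iff by auto
    ultimately show ?thesis using u(1) unfolding A_def by (intro exI[of _ "(u, h)"]) auto
  qed
  then have "\<forall>n. \<exists>T. continuous_on UNIV (fst T) \<and> hajlasz_gradient m \<beta> p (\<lambda>x. f x - fst T x) (snd T) \<and>
      lp_enorm m p (\<lambda>x. ennreal \<bar>f x - fst T x\<bar>) < ennreal (\<epsilon> n) \<and> lp_enorm m p (\<lambda>x. ennreal (snd T x)) < ennreal (\<epsilon> n)" by blast
  from choice[OF this] obtain T where T0: "\<forall>n. continuous_on UNIV (fst (T n)) \<and> hajlasz_gradient m \<beta> p (\<lambda>x. f x - fst (T n) x) (snd (T n)) \<and>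
      lp_enorm m p (\<lambda>x. ennreal \<bar>f x - fst (T n) x\<bar>) < ennreal (\<epsilon> n) \<and> lp_enorm m p (\<lambda>x. ennreal (snd (T n) x)) < ennreal (\<epsilon> n)" ..
  have T: "\<And>n. continuous_on UNIV (fst (T n))" "\<And>n. hajlasz_gradient m \<beta> p (\<lambda>x. f x - fst (T n) x) (snd (T n))"
      "\<And>n. lp_enorm m p (\<lambda>x. ennreal \<bar>f x - fst (T n) x\<bar>) < ennreal (\<epsilon> n)"
      "\<And>n. lp_enorm m p (\<lambda>x. ennreal (snd (T n) x)) < ennreal (\<epsilon> n)"
    using T0 by auto
  define u where "u n = fst (T n)" for n
  define h where "h n = snd (T n)" for n
  have uc: "continuous_on UNIV (u n)" for n using T(1) unfolding u_def by simp
  have um: "u n \<in> borel_measurable borel" for n using uc by (rule borel_measurable_continuous_onI)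
  have hg: "hajlasz_gradient m \<beta> p (\<lambda>x. f x - u n x) (h n)" for n using T(2) unfolding u_def h_def by simp
  have lpu: "lp_enorm m p (\<lambda>x. ennreal \<bar>f x - u n x\<bar>) < ennreal (\<epsilon> n)" for n using T(3) unfolding u_def by simp
  have lph: "lp_enorm m p (\<lambda>x. ennreal (h n x)) < ennreal (\<epsilon> n)" for n using T(4) unfolding h_def by simp
  have h0: "0 \<le> h n x" for n x using hg[of n] unfolding hajlasz_gradient_def by auto
  have hm: "h n \<in> borel_measurable borel" for n using hg[of n] unfolding hajlasz_gradient_def in_Lp_def mcong by auto
  have "\<exists>E. E \<in> sets borel \<and> emeasure m E = 0 \<and> (\<forall>x y. x \<notin> E \<and> y \<notin> E \<longrightarrow>
      \<bar>(f x - u n x) - (f y - u n y)\<bar> \<le> dist x y powr \<beta> * (h n x + h n y))" for n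
    using hg[of n] unfolding hajlasz_gradient_def sm by blast
  then have "\<forall>n. \<exists>E. E \<in> sets borel \<and> emeasure m E = 0 \<and> (\<forall>x y. x \<notin> E \<and> y \<notin> E \<longrightarrow>
      \<bar>(f x - u n x) - (f y - u n y)\<bar> \<le> dist x y powr \<beta> * (h n x + h n y))" by blast
  from choice[OF this] obtain E where E0': "\<forall>n. E n \<in> sets borel \<and> emeasure m (E n) = 0 \<and> (\<forall>x y. x \<notin> E n \<and> y \<notin> E n \<longrightarrow>
      \<bar>(f x - u n x) - (f y - u n y)\<bar> \<le> dist x y powr \<beta> * (h n x + h n y))" ..
  have E: "\<And>n. E n \<in> sets borel" "\<And>n. emeasure m (E n) = 0"
    "\<And>n x y. x \<notin> E n \<Longrightarrow> y \<notin> E n \<Longrightarrow> \<bar>(f x - u n x) - (f y - u n y)\<bar> \<le> dist x y powr \<beta> * (h n x + h n y)"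
    using E0' by auto
  note hm[measurable] um[measurable] fm[measurable] gm[measurable]
  define t1 where "t1 n x = enn_powr (ennreal (real (Suc n) * h n x)) p" for n x
  define t2 where "t2 n x = enn_powr (ennreal (real (Suc n) * \<bar>f x - u n x\<bar>)) p" for n x
  define S where "S x = (\<Sum>n. t1 n x + t2 n x)" for x
  define G where "G x = enn_powr (S x) (1/p)" for x
  have t1m[measurable]: "t1 n \<in> borel_measurable borel" for n unfolding t1_def by measurable
  have t2m[measurable]: "t2 n \<in> borel_measurable borel" for n unfolding t2_def by measurable
  have Sm[measurable]: "S \<in> borel_measurable borel" unfolding S_def by measurable
  have Gm[measurable]: "G \<in> borel_measurable borel" unfolding G_def by measurable
  have e_n: "real (Suc n) * \<epsilon> n = Mr / 2^Suc n" for n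
  proof -
    have gen: "a * (Mr / (a * b)) = Mr / b" if "0 < a" for a b :: real using that by simp
    show ?thesis unfolding \<epsilon>_def by (rule gen) simp
  qed
  have tb: "(\<integral>\<^sup>+x. t1 n x + t2 n x \<partial>m) \<le> ennreal (Mr powr p * (1/2)^n)" for n
  proof -
    have "(\<integral>\<^sup>+x. t1 n x + t2 n x \<partial>m) = (\<integral>\<^sup>+x. t1 n x \<partial>m) + (\<integral>\<^sup>+x. t2 n x \<partial>m)"
      by (intro nn_integral_add) (auto simp: mcong)
    also have "(\<integral>\<^sup>+x. t1 n x \<partial>m) \<le> ennreal ((real (Suc n) * \<epsilon> n) powr p)"
      unfolding t1_def using lph[of n] \<epsilon>pos[of n] h0 by (intro term_bound p1) (auto simp: mcong less_imp_le)
    also have "(\<integral>\<^sup>+x. t2 n x \<partial>m) \<le> ennreal ((real (Suc n) * \<epsilon> n) powr p)"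
      unfolding t2_def using lpu[of n] \<epsilon>pos[of n] by (intro term_bound p1) (auto simp: mcong less_imp_le)
    also have "ennreal ((real (Suc n) * \<epsilon> n) powr p) + ennreal ((real (Suc n) * \<epsilon> n) powr p)
        = ennreal (2 * (Mr / 2^Suc n) powr p)" unfolding e_n by (simp add: ennreal_plus[symmetric] del: ennreal_plus)
    also have "\<dots> \<le> ennreal (2 * (Mr powr p / 2^Suc n))"
      using geom_bound[OF p1, of Mr "Suc n"] Mr0 by (intro ennreal_leI) auto
    also have "2 * (Mr powr p / 2^Suc n) = Mr powr p * (1/2)^n" by (simp add: field_simps power_divide)
    finally show ?thesis by (simp add: add_mono)
  qed
  have geo: "(\<lambda>n. Mr powr p * (1/2)^n) sums (Mr powr p * 2)"
    using sums_mult[OF geometric_sums[of "1/2::real"], of "Mr powr p"] by simp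
  have Sint: "(\<integral>\<^sup>+x. S x \<partial>m) \<le> ennreal (2 * Mr powr p)"
  proof -
    have "(\<integral>\<^sup>+x. S x \<partial>m) = (\<Sum>n. \<integral>\<^sup>+x. t1 n x + t2 n x \<partial>m)"
      unfolding S_def by (rule nn_integral_suminf) (auto simp: mcong)
    also have "\<dots> \<le> (\<Sum>n. ennreal (Mr powr p * (1/2)^n))"
      by (intro suminf_le summableI tb)
    also have "\<dots> = ennreal (\<Sum>n. Mr powr p * (1/2)^n)"
      using geo by (intro suminf_ennreal2) (auto simp: sums_summable)
    also have "(\<Sum>n. Mr powr p * (1/2)^n) = 2 * Mr powr p" using geo sums_unique by force
    finally show ?thesis .
  qed
  have Gint: "(\<integral>\<^sup>+x. enn_powr (G x) p \<partial>m) \<le> ennreal (2 * Mr powr p)"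
    unfolding G_def enn_powr_inv1[OF p0] by (rule Sint)
  have Sge: "t1 n x + t2 n x \<le> S x" for n x
    unfolding S_def using sum_le_suminf[OF summableI, of "{n}" "\<lambda>n. t1 n x + t2 n x"] by simp
  have Gge: "ennreal (real (Suc n) * y) \<le> G x" if "0 \<le> y" "enn_powr (ennreal (real (Suc n) * y)) p \<le> S x" for n x y
  proof -
    have "ennreal (real (Suc n) * y) = enn_powr (enn_powr (ennreal (real (Suc n) * y)) p) (1/p)"
      using enn_powr_inv2[OF p0] by simp
    also have "\<dots> \<le> G x" unfolding G_def using that p0 by (intro enn_powr_mono) auto
    finally show ?thesis .
  qed
  have S1: "t1 n x \<le> S x" for n x
    using order_trans[OF _ Sge[of n x], of "t1 n x"] by (simp add: add_increasing2)
  have S2: "t2 n x \<le> S x" for n x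
    using order_trans[OF _ Sge[of n x], of "t2 n x"] by (simp add: add_increasing)
  have Gh: "ennreal (real (Suc n) * h n x) \<le> G x" for n x
    using Gge[of "h n x" n x] h0[of n x] S1[of n x] unfolding t1_def by blast
  have Gf: "ennreal (real (Suc n) * \<bar>f x - u n x\<bar>) \<le> G x" for n x
    using Gge[of "\<bar>f x - u n x\<bar>" n x] S2[of n x] unfolding t2_def by simp
  define Sinf where "Sinf = {x. S x = \<infinity>}"
  have Sinf_sets: "Sinf \<in> sets borel" unfolding Sinf_def by measurable
  have Sfin: "(\<integral>\<^sup>+x. S x \<partial>m) \<noteq> \<infinity>" using Sint by (auto simp: top_unique)
  have "AE x in m. S x \<noteq> \<infinity>" using Sfin by (intro nn_integral_PInf_AE) (auto simp: mcong)
  then have Sinf_null: "emeasure m Sinf = 0"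
    using AE_iff_measurable[of Sinf m "\<lambda>x. S x \<noteq> \<infinity>"] Sinf_sets sm spm unfolding Sinf_def by auto
  define N where "N = E0 \<union> (\<Union>n. E n) \<union> Sinf"
  have "(\<Union>n. E n) \<in> sets borel" using E(1) by (intro sets.countable_UN) auto
  then have Nsets: "N \<in> sets borel" unfolding N_def using E0(1) Sinf_sets by (intro sets.Un)
  have nullE0: "E0 \<in> null_sets m" using E0 sm by (auto simp: null_sets_def)
  have nullE: "E n \<in> null_sets m" for n using E sm by (auto simp: null_sets_def)
  have nullS: "Sinf \<in> null_sets m" using Sinf_null Sinf_sets sm by (auto simp: null_sets_def)
  have "N \<in> null_sets m" unfolding N_def by (intro null_sets.Un null_sets_UN nullE0 nullE nullS)
  then have Nnull: "emeasure m N = 0" by (rule null_setsD1)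
  have GNfin: "G x \<noteq> \<infinity>" if "x \<notin> N" for x
  proof -
    have "S x \<noteq> \<infinity>" using that unfolding N_def Sinf_def by blast
    then show ?thesis unfolding G_def enn_powr_def by simp
  qed
  have convf: "(\<lambda>n. u n x) \<longlonglongrightarrow> f x" if x: "x \<notin> N" for x
  proof -
    define Gx where "Gx = enn2real (G x)"
    have Gx0: "0 \<le> Gx" unfolding Gx_def by (rule enn2real_nonneg)
    have GGx: "G x = ennreal Gx" unfolding Gx_def using GNfin[OF x] ennreal_enn2real[of "G x"] by (simp add: less_top)
    have b: "\<bar>u n x - f x\<bar> \<le> Gx * inverse (real (Suc n))" for n
    proof -
      have "ennreal (real (Suc n) * \<bar>f x - u n x\<bar>) \<le> ennreal Gx" using Gf[of n x] unfolding GGx .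
      then have 1: "real (Suc n) * \<bar>f x - u n x\<bar> \<le> Gx" by (subst (asm) ennreal_le_iff[OF Gx0])
      have pos: "0 < real (Suc n)" by simp
      have "\<bar>f x - u n x\<bar> \<le> Gx / real (Suc n)" using 1 pos by (simp add: pos_le_divide_eq mult.commute)
      then show ?thesis by (simp add: abs_minus_commute divide_inverse)
    qed
    have "(\<lambda>n. Gx * inverse (real (Suc n))) \<longlonglongrightarrow> 0"
      using tendsto_mult_right_zero[OF LIMSEQ_inverse_real_of_nat, of Gx] by simp
    moreover have "eventually (\<lambda>n. norm (u n x - f x) \<le> Gx * inverse (real (Suc n))) sequentially"
      by (intro always_eventually allI) (simp only: real_norm_def b)
    ultimately have "(\<lambda>n. u n x - f x) \<longlonglongrightarrow> 0" by (rule Lim_null_comparison[rotated])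
    then show ?thesis by (rule LIM_zero_cancel)
  qed
  have Pborel: "pimage P \<in> sets borel" if "P \<in> \<Gamma>s" for P
  proof -
    obtain a b \<gamma> where P: "P = (a, b, \<gamma>)" by (cases P) auto
    then have "continuous_on {a..b} \<gamma>" using that GS unfolding Gamma_mu_def by auto
    then have "compact (\<gamma> ` {a..b})" by (rule compact_continuous_image) simp
    then show ?thesis unfolding P by (simp add: borel_closed compact_imp_closed)
  qed
  define \<Gamma>0 where "\<Gamma>0 = {P\<in>\<Gamma>s. 0 < emeasure \<mu> (pimage P \<inter> N) \<or> path_int \<mu> P G = \<infinity>}"
  have Gfin: "(\<integral>\<^sup>+x. enn_powr (G x) p \<partial>m) \<noteq> \<infinity>" using Gint by (auto simp: top_unique)
  have Mod0: "Mod \<mu> m p \<Gamma>0 = 0"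
    by (rule Mod_zero[OF sm smu p0 Nsets Nnull Gm Gfin]) (auto simp: \<Gamma>0_def Pborel)
  define \<rho> where "\<rho> x = ennreal K * (ennreal (g x) + G x)" for x
  have \<rho>m[measurable]: "\<rho> \<in> borel_measurable borel" unfolding \<rho>_def by measurable
  define f' where "f' x = lim (\<lambda>n. u n x)" for x
  have good: "ennreal \<bar>f' (\<gamma> a) - f' (\<gamma> b)\<bar> \<le> path_int \<mu> (a, b, \<gamma>) \<rho>"
    if P: "(a, b, \<gamma>) \<in> \<Gamma>s" "(a, b, \<gamma>) \<notin> \<Gamma>0" for a b \<gamma>
  proof -
    interpret gp: gpath \<mu> \<beta> C0 a b \<gamma> by (rule gamma_gpath[OF smu na GS sc C0 ac0 beta P(1)])
    have PN: "emeasure \<mu> (\<gamma>`{a..b} \<inter> N) = 0" and PG: "path_int \<mu> (a, b, \<gamma>) G \<noteq> \<infinity>"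
      using P unfolding \<Gamma>0_def by auto
    define Gr where "Gr = enn2real (path_int \<mu> (a, b, \<gamma>) G)"
    have Gr0: "0 \<le> Gr" unfolding Gr_def by simp
    have PGr: "path_int \<mu> (a, b, \<gamma>) G = ennreal Gr"
      unfolding Gr_def using PG ennreal_enn2real[of "path_int \<mu> (a, b, \<gamma>) G"] by (simp add: less_top)
    have Nmu: "N \<in> sets \<mu>" using Nsets smu by simp
    have Pmu: "\<gamma>`{a..b} \<in> sets \<mu>" by (rule gp.img_sets) auto
    have Pb: "\<gamma>`{a..b} \<in> sets borel" using Pmu smu by simp
    have hpath: "path_int \<mu> (a, b, \<gamma>) (\<lambda>x. ennreal (h n x)) \<le> ennreal (Gr * inverse (real (Suc n)))" for n
    proof -
      define X where "X = path_int \<mu> (a, b, \<gamma>) (\<lambda>x. ennreal (h n x))"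
      have "ennreal (real (Suc n)) * X = (\<integral>\<^sup>+x. ennreal (real (Suc n)) * (ennreal (h n x) * indicator (\<gamma>`{a..b}) x) \<partial>\<mu>)"
        unfolding X_def path_int_def pimage_eq using Pb
        by (intro nn_integral_cmult[symmetric]) (auto simp: mucong intro!: borel_measurable_times_ennreal borel_measurable_indicator)
      also have "\<dots> \<le> path_int \<mu> (a, b, \<gamma>) G"
        unfolding path_int_def pimage_eq
      proof (intro nn_integral_mono)
        fix x
        have "ennreal (real (Suc n)) * ennreal (h n x) = ennreal (real (Suc n) * h n x)"
          using h0 by (simp add: ennreal_mult)
        also have "\<dots> \<le> G x" by (rule Gh)
        finally show "ennreal (real (Suc n)) * (ennreal (h n x) * indicator (\<gamma>`{a..b}) x) \<le> G x * indicator (\<gamma>`{a..b}) x"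
          by (auto split: split_indicator)
      qed
      finally have 1: "ennreal (real (Suc n)) * X \<le> ennreal Gr" unfolding PGr .
      have inv1: "ennreal (inverse (real (Suc n))) * ennreal (real (Suc n)) = 1"
        using ennreal_mult[of "inverse (real (Suc n))" "real (Suc n)", symmetric] by (simp del: of_nat_Suc)
      have "X = ennreal (inverse (real (Suc n))) * (ennreal (real (Suc n)) * X)"
        by (simp only: mult.assoc[symmetric] inv1 mult_1)
      also have "\<dots> \<le> ennreal (inverse (real (Suc n))) * ennreal Gr" using 1 by (rule mult_left_mono) simp
      also have "\<dots> = ennreal (Gr * inverse (real (Suc n)))" using Gr0 by (simp add: ennreal_mult mult.commute)
      finally show ?thesis unfolding X_def .
    qed
    have diffb: "ennreal \<bar>(u n (\<gamma> s) - u k (\<gamma> s)) - (u n (\<gamma> t) - u k (\<gamma> t))\<bar> \<le>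
        ennreal K * (path_int \<mu> (a, b, \<gamma>) (\<lambda>x. ennreal (h n x)) + path_int \<mu> (a, b, \<gamma>) (\<lambda>x. ennreal (h k x)))"
      if st: "s \<in> {a..b}" "t \<in> {a..b}" for n k s t
    proof -
      define Dn where "Dn x = u n x - u k x" for x
      define RHS where "RHS = ennreal K * (path_int \<mu> (a, b, \<gamma>) (\<lambda>x. ennreal (h n x)) + path_int \<mu> (a, b, \<gamma>) (\<lambda>x. ennreal (h k x)))"
      have main: "ennreal \<bar>Dn (\<gamma> s') - Dn (\<gamma> t')\<bar> \<le> RHS" if h': "a \<le> s'" "s' \<le> t'" "t' \<le> b" for s' t'
      proof (cases "s' = t'")
        case True then show ?thesis by simp
      next
        case False
        then have lt: "s' < t'" using h' by simp
        have P': "(s', t', \<gamma>) \<in> \<Gamma>s" using sc P(1) h' lt unfolding subpath_closed_def by blast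
        have Dc: "continuous_on UNIV Dn" unfolding Dn_def by (intro continuous_on_diff uc)
        have wm: "(\<lambda>x. h n x + h k x) \<in> borel_measurable borel" by measurable
        have ENK: "E n \<union> E k \<in> sets borel" using E(1) by auto
        have "emeasure \<mu> (pimage (s', t', \<gamma>) \<inter> (E n \<union> E k)) \<le> emeasure \<mu> (\<gamma>`{a..b} \<inter> N)"
          using h' Pmu Nmu by (intro emeasure_mono) (auto simp: N_def)
        then have null': "emeasure \<mu> (pimage (s', t', \<gamma>) \<inter> (E n \<union> E k)) = 0" using PN by simp
        have hj: "\<bar>Dn x - Dn y\<bar> \<le> dist x y powr \<beta> * ((h n x + h k x) + (h n y + h k y))"
          if xy: "x \<notin> E n \<union> E k" "y \<notin> E n \<union> E k" for x y
        proof -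
          have e1: "\<bar>(f x - u n x) - (f y - u n y)\<bar> \<le> dist x y powr \<beta> * (h n x + h n y)" using E(3)[of x n y] xy by auto
          have e2: "\<bar>(f x - u k x) - (f y - u k y)\<bar> \<le> dist x y powr \<beta> * (h k x + h k y)" using E(3)[of x k y] xy by auto
          have eq: "Dn x - Dn y = ((f x - u k x) - (f y - u k y)) - ((f x - u n x) - (f y - u n y))"
            unfolding Dn_def by simp
          have "\<bar>Dn x - Dn y\<bar> \<le> \<bar>(f x - u k x) - (f y - u k y)\<bar> + \<bar>(f x - u n x) - (f y - u n y)\<bar>"
            unfolding eq by (rule abs_triangle_ineq4)
          also have "\<dots> \<le> dist x y powr \<beta> * (h k x + h k y) + dist x y powr \<beta> * (h n x + h n y)"
            using e1 e2 by (rule add_mono[rotated])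
          also have "\<dots> = dist x y powr \<beta> * ((h n x + h k x) + (h n y + h k y))" by (simp add: algebra_simps)
          finally show ?thesis .
        qed
        have "ennreal \<bar>Dn (\<gamma> s') - Dn (\<gamma> t')\<bar> \<le> ennreal (9 * C0) * path_int \<mu> (s', t', \<gamma>) (\<lambda>x. ennreal (h n x + h k x))"
          by (rule cont_ug[OF smu na GS sc C0 ac0 beta P' Dc wm _ ENK null' hj]) (auto intro: add_nonneg_nonneg h0)
        also have "path_int \<mu> (s', t', \<gamma>) (\<lambda>x. ennreal (h n x + h k x)) \<le> path_int \<mu> (a, b, \<gamma>) (\<lambda>x. ennreal (h n x + h k x))"
          unfolding path_int_def pimage_eq using h' by (intro gp.set_mono_int) auto
        also have "path_int \<mu> (a, b, \<gamma>) (\<lambda>x. ennreal (h n x + h k x)) = path_int \<mu> (a, b, \<gamma>) (\<lambda>x. ennreal (h n x)) + path_int \<mu> (a, b, \<gamma>) (\<lambda>x. ennreal (h k x))"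
        proof -
          have "path_int \<mu> (a, b, \<gamma>) (\<lambda>x. ennreal (h n x + h k x)) = (\<integral>\<^sup>+x. ennreal (h n x) * indicator (\<gamma>`{a..b}) x + ennreal (h k x) * indicator (\<gamma>`{a..b}) x \<partial>\<mu>)"
            unfolding path_int_def pimage_eq using h0 by (intro nn_integral_cong) (simp add: ennreal_plus distrib_right)
          also have "\<dots> = path_int \<mu> (a, b, \<gamma>) (\<lambda>x. ennreal (h n x)) + path_int \<mu> (a, b, \<gamma>) (\<lambda>x. ennreal (h k x))"
            unfolding path_int_def pimage_eq using Pb
            by (intro nn_integral_add) (auto simp: mucong intro!: borel_measurable_times_ennreal borel_measurable_indicator)
          finally show ?thesis .
        qed
        finally show ?thesis unfolding RHS_def K_def by (simp add: mult_left_mono)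
      qed
      show ?thesis
      proof (cases "s \<le> t")
        case True then show ?thesis using main[of s t] st unfolding Dn_def RHS_def by auto
      next
        case False then show ?thesis using main[of t s] st unfolding Dn_def RHS_def by (auto simp: abs_minus_commute)
      qed
    qed
    have diffr: "\<bar>(u n (\<gamma> s) - u k (\<gamma> s)) - (u n (\<gamma> t) - u k (\<gamma> t))\<bar> \<le>
        K * (Gr * inverse (real (Suc n)) + Gr * inverse (real (Suc k)))"
      if st: "s \<in> {a..b}" "t \<in> {a..b}" for n k s t
    proof -
      have "ennreal \<bar>(u n (\<gamma> s) - u k (\<gamma> s)) - (u n (\<gamma> t) - u k (\<gamma> t))\<bar> \<le>
        ennreal K * (ennreal (Gr * inverse (real (Suc n))) + ennreal (Gr * inverse (real (Suc k))))"
        using diffb[OF st, of n k] hpath[of n] hpath[of k] by (meson add_mono mult_left_mono order_trans zero_le)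
      also have "\<dots> = ennreal (K * (Gr * inverse (real (Suc n)) + Gr * inverse (real (Suc k))))"
        using K0 Gr0 by (simp add: ennreal_mult ennreal_plus)
      finally show ?thesis using K0 Gr0 by (subst (asm) ennreal_le_iff) auto
    qed
    obtain t0 where t0: "t0 \<in> {a..b}" "\<gamma> t0 \<notin> N"
    proof -
      have "\<exists>t0\<in>{a..b}. \<gamma> t0 \<notin> N"
      proof (rule ccontr)
        assume "\<not> ?thesis"
        then have "\<gamma>`{a..b} \<inter> N = \<gamma>`{a..b}" by auto
        then have "emeasure \<mu> (\<gamma>`{a..b}) = 0" using PN by simp
        then show False using gp.pos[of a b] gp.ab by simp
      qed
      then show ?thesis using that by blast
    qed
    have conv: "convergent (\<lambda>n. u n (\<gamma> t))" if t: "t \<in> {a..b}" for t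
    proof -
      define v where "v n = u n (\<gamma> t) - u n (\<gamma> t0)" for n
      have "Cauchy v"
      proof (rule CauchyI)
        fix e :: real assume e: "0 < e"
        define c where "c = 2 * K * Gr + 1"
        have c1: "1 \<le> c" unfolding c_def using K0 Gr0 by simp
        obtain N0 where N0: "inverse (real (Suc N0)) < e / c" using reals_Archimedean[of "e / c"] e c1 by auto
        show "\<exists>M. \<forall>m\<ge>M. \<forall>n\<ge>M. norm (v m - v n) < e"
        proof (intro exI[of _ N0] allI impI)
          fix m n assume mn: "N0 \<le> m" "N0 \<le> n"
          have im: "inverse (real (Suc m)) \<le> inverse (real (Suc N0))" using mn by (intro le_imp_inverse_le) auto
          have inn: "inverse (real (Suc n)) \<le> inverse (real (Suc N0))" using mn by (intro le_imp_inverse_le) auto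
          have "norm (v m - v n) = \<bar>(u m (\<gamma> t) - u n (\<gamma> t)) - (u m (\<gamma> t0) - u n (\<gamma> t0))\<bar>"
            unfolding v_def by (simp add: algebra_simps)
          also have "\<dots> \<le> K * (Gr * inverse (real (Suc m)) + Gr * inverse (real (Suc n)))"
            by (rule diffr[OF t t0(1)])
          also have "\<dots> \<le> K * (Gr * inverse (real (Suc N0)) + Gr * inverse (real (Suc N0)))"
            using im inn K0 Gr0 by (intro mult_left_mono add_mono mult_left_mono) auto
          also have "\<dots> = (c - 1) * inverse (real (Suc N0))" unfolding c_def by (simp add: algebra_simps)
          also have "\<dots> \<le> c * inverse (real (Suc N0))" by (intro mult_right_mono) auto
          also have "\<dots> < c * (e / c)" using N0 c1 by (intro mult_strict_left_mono) auto
          also have "\<dots> = e" using c1 by simp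
          finally show "norm (v m - v n) < e" .
        qed
      qed
      then have "convergent v" by (simp add: Cauchy_convergent_iff)
      moreover have "convergent (\<lambda>n. u n (\<gamma> t0))" using convf[OF t0(2)] by (rule convergentI)
      ultimately have "convergent (\<lambda>n. v n + u n (\<gamma> t0))" by (rule convergent_add)
      then show ?thesis unfolding v_def by simp
    qed
    have lim: "(\<lambda>n. u n (\<gamma> t)) \<longlonglongrightarrow> f' (\<gamma> t)" if t: "t \<in> {a..b}" for t
      using conv[OF t] unfolding f'_def by (simp add: convergent_LIMSEQ_iff)
    have each: "ennreal \<bar>u n (\<gamma> a) - u n (\<gamma> b)\<bar> \<le> path_int \<mu> (a, b, \<gamma>) \<rho>" for n
    proof -
      have wm: "(\<lambda>x. g x + h n x) \<in> borel_measurable borel" by measurable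
      have ENK: "E0 \<union> E n \<in> sets borel" using E(1) E0(1) by auto
      have "emeasure \<mu> (pimage (a, b, \<gamma>) \<inter> (E0 \<union> E n)) \<le> emeasure \<mu> (\<gamma>`{a..b} \<inter> N)"
        using Pmu Nmu by (intro emeasure_mono) (auto simp: N_def)
      then have null': "emeasure \<mu> (pimage (a, b, \<gamma>) \<inter> (E0 \<union> E n)) = 0" using PN by simp
      have hj: "\<bar>u n x - u n y\<bar> \<le> dist x y powr \<beta> * ((g x + h n x) + (g y + h n y))"
        if xy: "x \<notin> E0 \<union> E n" "y \<notin> E0 \<union> E n" for x y
      proof -
        have e1: "\<bar>(f x - u n x) - (f y - u n y)\<bar> \<le> dist x y powr \<beta> * (h n x + h n y)" using E(3)[of x n y] xy by auto
        have e2: "\<bar>f x - f y\<bar> \<le> dist x y powr \<beta> * (g x + g y)" using E0(3)[of x y] xy by auto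
        have eq: "u n x - u n y = (f x - f y) - ((f x - u n x) - (f y - u n y))" by simp
        have "\<bar>u n x - u n y\<bar> \<le> \<bar>f x - f y\<bar> + \<bar>(f x - u n x) - (f y - u n y)\<bar>"
          unfolding eq by (rule abs_triangle_ineq4)
        also have "\<dots> \<le> dist x y powr \<beta> * (g x + g y) + dist x y powr \<beta> * (h n x + h n y)"
          using e1 e2 by (rule add_mono[rotated])
        also have "\<dots> = dist x y powr \<beta> * ((g x + h n x) + (g y + h n y))" by (simp add: algebra_simps)
        finally show ?thesis .
      qed
      have "ennreal \<bar>u n (\<gamma> a) - u n (\<gamma> b)\<bar> \<le> ennreal (9 * C0) * path_int \<mu> (a, b, \<gamma>) (\<lambda>x. ennreal (g x + h n x))"
        by (rule cont_ug[OF smu na GS sc C0 ac0 beta P(1) uc wm _ ENK null' hj]) (auto intro: add_nonneg_nonneg h0 g0')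
      also have "path_int \<mu> (a, b, \<gamma>) (\<lambda>x. ennreal (g x + h n x)) \<le> path_int \<mu> (a, b, \<gamma>) (\<lambda>x. ennreal (g x) + G x)"
        unfolding path_int_def
      proof (intro nn_integral_mono)
        fix x
        have "ennreal (h n x) \<le> ennreal (real (Suc n) * h n x)" using h0[of n x] by (intro ennreal_leI) (simp add: mult_le_cancel_right1)
        also have "\<dots> \<le> G x" by (rule Gh)
        finally have "ennreal (g x + h n x) \<le> ennreal (g x) + G x" using g0' h0 by (simp add: ennreal_plus add_left_mono)
        then show "ennreal (g x + h n x) * indicator (pimage (a, b, \<gamma>)) x \<le> (ennreal (g x) + G x) * indicator (pimage (a, b, \<gamma>)) x"
          by (auto split: split_indicator)
      qed
      also have "ennreal (9 * C0) * path_int \<mu> (a, b, \<gamma>) (\<lambda>x. ennreal (g x) + G x) = path_int \<mu> (a, b, \<gamma>) \<rho>"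
        unfolding path_int_def pimage_eq \<rho>_def K_def using Pb
        by (subst nn_integral_cmult[symmetric]) (auto simp: mucong mult.assoc intro!: borel_measurable_times_ennreal borel_measurable_indicator)
      finally show ?thesis by (simp add: mult_left_mono)
    qed
    show ?thesis
    proof (cases "path_int \<mu> (a, b, \<gamma>) \<rho> = \<infinity>")
      case True then show ?thesis by simp
    next
      case False
      define R where "R = enn2real (path_int \<mu> (a, b, \<gamma>) \<rho>)"
      have R0: "0 \<le> R" unfolding R_def by simp
      have PR: "path_int \<mu> (a, b, \<gamma>) \<rho> = ennreal R"
        unfolding R_def using False ennreal_enn2real[of "path_int \<mu> (a, b, \<gamma>) \<rho>"] by (simp add: less_top)
      have "\<bar>u n (\<gamma> a) - u n (\<gamma> b)\<bar> \<le> R" for n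
        using each[of n] unfolding PR by (subst (asm) ennreal_le_iff[OF R0])
      moreover have "(\<lambda>n. \<bar>u n (\<gamma> a) - u n (\<gamma> b)\<bar>) \<longlonglongrightarrow> \<bar>f' (\<gamma> a) - f' (\<gamma> b)\<bar>"
        using gp.ab by (intro tendsto_intros lim) auto
      ultimately have "\<bar>f' (\<gamma> a) - f' (\<gamma> b)\<bar> \<le> R" by (intro LIMSEQ_le_const2) auto
      then show ?thesis unfolding PR by (rule ennreal_leI)
    qed
  qed
  have wug: "weak_upper_gradient \<Gamma>s \<mu> m p f' \<rho>"
    unfolding weak_upper_gradient_def
  proof (intro conjI exI[of _ \<Gamma>0])
    show "\<rho> \<in> borel_measurable borel" by (rule \<rho>m)
    show "\<Gamma>0 \<subseteq> \<Gamma>s" unfolding \<Gamma>0_def by auto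
    show "Mod \<mu> m p \<Gamma>0 = 0" by (rule Mod0)
    show "\<forall>a b \<gamma>. (a, b, \<gamma>) \<in> \<Gamma>s - \<Gamma>0 \<longrightarrow> ennreal \<bar>f' (\<gamma> a) - f' (\<gamma> b)\<bar> \<le> path_int \<mu> (a, b, \<gamma>) \<rho>"
      using good by auto
  qed
  have f'm: "f' \<in> borel_measurable borel" unfolding f'_def by measurable
  have ae: "AE x in m. f' x = f x"
    using AE_not_in[OF \<open>N \<in> null_sets m\<close>]
  proof eventually_elim
    case (elim x)
    show ?case unfolding f'_def by (rule limI[OF convf[OF elim]])
  qed
  have lpf': "lp_enorm m p (\<lambda>x. ennreal \<bar>f' x\<bar>) = lp_enorm m p (\<lambda>x. ennreal \<bar>f x\<bar>)"
    using ae by (intro lp_cong_AE) (auto elim: eventually_mono)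
  have inLp: "in_Lp m p f'"
    unfolding in_Lp_def using f'm lpf' lpf Mfin by (auto simp: mcong)
  have gint: "(\<integral>\<^sup>+x. enn_powr (ennreal (g x)) p \<partial>m) \<le> ennreal ((2 * Mr) powr p)"
    using g(2) Mr0 p0 by (intro lp_le_int) auto
  have lp\<rho>: "lp_enorm m p \<rho> \<le> ennreal (8 * K * Mr)"
  proof (rule lp_bound[OF p0])
    show "0 \<le> 8 * K * Mr" using K0 Mr0 by simp
    have "(\<integral>\<^sup>+x. enn_powr (\<rho> x) p \<partial>m) = (\<integral>\<^sup>+x. ennreal (K powr p) * enn_powr (ennreal (g x) + G x) p \<partial>m)"
      unfolding \<rho>_def using K0 p0 by (intro nn_integral_cong) (simp add: enn_powr_cmult)
    also have "\<dots> \<le> (\<integral>\<^sup>+x. ennreal (K powr p) * (ennreal (2 powr p) * (enn_powr (ennreal (g x)) p + enn_powr (G x) p)) \<partial>m)"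
      by (intro nn_integral_mono mult_left_mono enn_powr_add_le p1) auto
    also have "\<dots> = ennreal (K powr p) * (ennreal (2 powr p) * ((\<integral>\<^sup>+x. enn_powr (ennreal (g x)) p \<partial>m) + (\<integral>\<^sup>+x. enn_powr (G x) p \<partial>m)))"
      by (simp add: nn_integral_cmult nn_integral_add mcong)
    also have "\<dots> \<le> ennreal (K powr p) * (ennreal (2 powr p) * (ennreal ((2 * Mr) powr p) + ennreal (2 * Mr powr p)))"
      using gint Gint by (intro mult_left_mono add_mono) auto
    also have "\<dots> = ennreal (K powr p * 2 powr p * ((2 * Mr) powr p + 2 * Mr powr p))"
      by (simp add: ennreal_mult ennreal_plus mult.assoc)
    also have "\<dots> \<le> ennreal ((8 * K * Mr) powr p)"
      using real_final[OF p1, of K Mr] K0 Mr0 by (intro ennreal_leI) auto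
    finally show "(\<integral>\<^sup>+x. enn_powr (\<rho> x) p \<partial>m) \<le> ennreal ((8 * K * Mr) powr p)" .
  qed
  have Nt: "f' \<in> Ntilde \<Gamma>s \<mu> m p"
    unfolding Ntilde_def using inLp wug lp\<rho> by (auto simp: le_less_trans[OF lp\<rho>])
  have "N_norm \<Gamma>s \<mu> m p f' \<le> lp_enorm m p (\<lambda>x. ennreal \<bar>f x\<bar>) + lp_enorm m p \<rho>"
    unfolding N_norm_def lpf' using wug by (intro add_left_mono INF_lower) auto
  also have "\<dots> \<le> ennreal Mr + ennreal (8 * K * Mr)"
    using lpf lp\<rho> unfolding MMr by (rule add_mono)
  also have "\<dots> = ennreal (72 * C0 + 1) * M_norm m \<beta> p f"
    unfolding M_def[symmetric] MMr K_def using Mr0 C0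
    by (simp add: ennreal_plus[symmetric] ennreal_mult[symmetric] algebra_simps del: ennreal_plus)
  finally show ?thesis using ae Nt by blast
qed



lemma lp_zero: "0 < p \<Longrightarrow> lp_enorm m p (\<lambda>x. 0) = 0"
  unfolding lp_enorm_def by (simp add: enn_powr_zero)

lemma main_zero:
  fixes \<mu> m :: "'a::metric_space measure" and p \<beta> :: real and \<Gamma>s :: "'a rpath set"
  assumes sm: "sets m = sets borel" and p1: "1 \<le> p"
    and f: "f \<in> Hajlasz m \<beta> p" and M0: "M_norm m \<beta> p f = 0"
  shows "\<exists>f'. (AE x in m. f' x = f x) \<and> f' \<in> Ntilde \<Gamma>s \<mu> m p \<and> N_norm \<Gamma>s \<mu> m p f' \<le> 0"
proof -
  have p0: "0 < p" using p1 by simp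
  have mcong: "\<And>N. measurable m N = measurable borel N" using measurable_cong_sets[OF sm refl] .
  have fm: "f \<in> borel_measurable borel" using f unfolding Hajlasz_def in_Lp_def mcong by simp
  have "lp_enorm m p (\<lambda>x. ennreal \<bar>f x\<bar>) \<le> M_norm m \<beta> p f"
    unfolding M_norm_def by (simp add: add_increasing2)
  then have "lp_enorm m p (\<lambda>x. ennreal \<bar>f x\<bar>) = 0" using M0 by simp
  then have "(\<integral>\<^sup>+x. enn_powr (ennreal \<bar>f x\<bar>) p \<partial>m) = 0"
    using lp_int[OF p0, of m "\<lambda>x. ennreal \<bar>f x\<bar>"] p0 by (simp add: enn_powr_zero)
  then have "AE x in m. enn_powr (ennreal \<bar>f x\<bar>) p = 0"
    using fm by (subst (asm) nn_integral_0_iff_AE) (auto simp: mcong)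
  then have ae: "AE x in m. 0 = f x"
  proof eventually_elim
    case (elim x)
    then have "\<bar>f x\<bar> powr p = 0" by (simp add: enn_powr_ennreal)
    then show ?case by simp
  qed
  have Mod0: "Mod \<mu> m p {} = 0"
  proof -
    have "Mod \<mu> m p {} \<le> (\<integral>\<^sup>+x. enn_powr 0 p \<partial>m)" unfolding Mod_def by (intro INF_lower) auto
    then show ?thesis using p0 by (simp add: enn_powr_zero)
  qed
  have wug: "weak_upper_gradient \<Gamma>s \<mu> m p (\<lambda>x. 0) (\<lambda>x. 0)"
    unfolding weak_upper_gradient_def using Mod0 by (intro conjI exI[of _ "{}"]) auto
  have z: "(\<lambda>x::'a. ennreal \<bar>0::real\<bar>) = (\<lambda>x. 0)" by simp
  have inLp: "in_Lp m p (\<lambda>x. 0)" unfolding in_Lp_def z using lp_zero[OF p0, of m] by simp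
  have lz: "lp_enorm m p (\<lambda>x. 0) = 0" by (rule lp_zero[OF p0])
  have e: "\<exists>\<rho>. weak_upper_gradient \<Gamma>s \<mu> m p (\<lambda>x. 0) \<rho> \<and> lp_enorm m p \<rho> < \<infinity>"
    by (rule exI[of _ "\<lambda>x. 0"]) (simp add: wug lz)
  have Nt: "(\<lambda>x. 0) \<in> Ntilde \<Gamma>s \<mu> m p" unfolding Ntilde_def mem_Collect_eq
    using inLp e by (rule conjI)
  have "(INF \<rho> \<in> {\<rho>. weak_upper_gradient \<Gamma>s \<mu> m p (\<lambda>x. 0) \<rho>}. lp_enorm m p \<rho>) \<le> lp_enorm m p (\<lambda>x. 0)"
    by (rule INF_lower) (simp add: wug)
  then have "N_norm \<Gamma>s \<mu> m p (\<lambda>x. 0) \<le> lp_enorm m p (\<lambda>x. ennreal \<bar>0\<bar>) + lp_enorm m p (\<lambda>x. 0)"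
    unfolding N_norm_def by (rule add_left_mono)
  also have "\<dots> = 0" unfolding z lz by simp
  finally have "N_norm \<Gamma>s \<mu> m p (\<lambda>x. 0) \<le> 0" .
  then show ?thesis using ae Nt by (intro exI[of _ "\<lambda>x. 0"] conjI)
qed

theorem corollary5p6:
  fixes \<mu> m :: "'a::metric_space measure" and p \<beta> :: real and \<Gamma>s :: "'a rpath set"
  assumes "sets \<mu> = sets borel" and "\<forall>x. emeasure \<mu> {x} = 0"
    and "sets m = sets borel"
    and "1 \<le> p" and "0 < \<beta>"
    and "\<Gamma>s \<subseteq> Gamma_mu \<mu>" and "subpath_closed \<Gamma>s" and "joins_points \<Gamma>s"
    and "arc_chord \<mu> \<beta> \<Gamma>s"
    and "continuous_dense_in_Hajlasz m \<beta> p"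
  shows "\<exists>C>0. \<forall>f \<in> Hajlasz m \<beta> p. \<exists>f'. (AE x in m. f' x = f x) \<and>
           f' \<in> Ntilde \<Gamma>s \<mu> m p \<and> N_norm \<Gamma>s \<mu> m p f' \<le> ennreal C * M_norm m \<beta> p f"
proof -
  obtain C0 where C0: "0 < C0" and ac0: "\<forall>P\<in>\<Gamma>s. ennreal (diameter (pimage P) powr \<beta>) \<le> ennreal C0 * emeasure \<mu> (pimage P)"
    using assms(9) unfolding arc_chord_def by blast
  show ?thesis
  proof (intro exI[of _ "72 * C0 + 1"] conjI ballI)
    show "0 < 72 * C0 + 1" using C0 by simp
    fix f assume f: "f \<in> Hajlasz m \<beta> p"
    show "\<exists>f'. (AE x in m. f' x = f x) \<and> f' \<in> Ntilde \<Gamma>s \<mu> m p \<and> N_norm \<Gamma>s \<mu> m p f' \<le> ennreal (72 * C0 + 1) * M_norm m \<beta> p f"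
    proof (cases "M_norm m \<beta> p f = 0")
      case True
      then show ?thesis using main_zero[OF assms(3) assms(4) f True, of \<Gamma>s \<mu>] by simp
    next
      case False
      then show ?thesis
        by (rule main_pos[OF assms(1,2,3,4,5,6,7) C0 ac0 assms(10) f])
    qed
  qed
qed


end
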